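(* Let $\omega>\gamma^2/4$. The real functions $\mathcal{Y}_1,\mathcal{Y}_2$ (real and imaginary parts of the eigenfunction $\mathcal{Y}_+$) belong to $\widetilde{\mathcal S}(\mathbb{R})$; in particular they are $C^\infty$ on $\mathbb{R}\setminus\{0\}$.
   Context: Fix $\gamma<0$, $p>5$, $\omega>\gamma^2/4$, and let $Q=Q_{\omega,\gamma}(x)=\big[\tfrac{(p+1)\omega}{2}\operatorname{sech}^2\big(\tfrac{(p-1)\sqrt\omega}{2}|x|+\tanh^{-1}(\tfrac{\gamma}{2\sqrt\omega})\big)\big]^{1/(p-1)}$. Let $\mathcal D_{\mathrm{even}}=\{f\in H^1(\mathbb{R})\cap H^2(\mathbb{R}\setminus\{0\})\text{ even}: f'(0+)-f'(0-)=-\gamma f(0)\}$, and on real-valued functions in $\mathcal D_{\mathrm{even}}$ define $L^-f=-f''+\omega f-Q^{p-1}f$ and $L^+f=-f''+\omega f-pQ^{p-1}f$ (derivatives on $\mathbb{R}\setminus\{0\}$). For complex $f=f_1+if_2$ let $\mathcal{L}f=-L^-f_2+iL^+f_1$. It is known that $\mathcal{L}$ on even functions has a simple positive eigenvalue $e_\omega>0$ with eigenfunction $\mathcal{Y}_+=\mathcal{Y}_1+i\mathcal{Y}_2$, $\mathcal Y_1,\mathcal Y_2\in\mathcal D_{\mathrm{even}}$ real, i.e. $L^+\mathcal{Y}_1=e_\omega\mathcal{Y}_2$, $L^-\mathcal{Y}_2=-e_\omega\mathcal{Y}_1$; and $\mathcal{Y}_-:=\overline{\mathcal Y_+}$ is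 an eigenfunction for $-e_\omega$. $BC^\infty_0(\mathbb{R})$ is the set of $C^\infty$ functions all of whose derivatives are bounded and which vanish on some open interval containing $0$. $\widetilde{\mathcal S}(\mathbb{R})=\{f\in C^\infty(\mathbb{R}\setminus\{0\}): \varphi f\in\mathcal S(\mathbb{R})\text{ for all }\varphi\in BC^\infty_0(\mathbb{R})\}$, where $\mathcal S$ is the Schwartz space. *)

theory Defs
  imports "HOL-Analysis.Analysis"
begin

definition smooth_on :: "real set \<Rightarrow> (real \<Rightarrow> real) \<Rightarrow> bool" where
  "smooth_on U f \<longleftrightarrow> (\<forall>k. \<forall>x\<in>U. ((deriv ^^ k) f) differentiable (at x))"

definition schwartz :: "(real \<Rightarrow> real) set" where
  "schwartz = {f. smooth_on UNIV f \<and>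
      (\<forall>j k. \<exists>C. \<forall>x. \<bar>x ^ j * (deriv ^^ k) f x\<bar> \<le> C)}"

definition BC0_inf :: "(real \<Rightarrow> real) set" where
  "BC0_inf = {\<phi>. smooth_on UNIV \<phi> \<and> (\<forall>k. \<exists>C. \<forall>x. \<bar>(deriv ^^ k) \<phi> x\<bar> \<le> C) \<and>
      (\<exists>a b. a < 0 \<and> 0 < b \<and> (\<forall>x\<in>{a<..<b}. \<phi> x = 0))}"

definition tilde_schwartz :: "(real \<Rightarrow> real) set" where
  "tilde_schwartz = {f. smooth_on (- {0}) f \<and> (\<forall>\<phi>\<in>BC0_inf. (\<lambda>x. \<phi> x * f x) \<in> schwartz)}"

definition test_fun :: "real set \<Rightarrow> (real \<Rightarrow> real) \<Rightarrow> bool" where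
  "test_fun U \<phi> \<longleftrightarrow> smooth_on UNIV \<phi> \<and> compact (closure {x. \<phi> x \<noteq> 0})
      \<and> closure {x. \<phi> x \<noteq> 0} \<subseteq> U"

definition loc_integrable :: "real set \<Rightarrow> (real \<Rightarrow> real) \<Rightarrow> bool" where
  "loc_integrable U f \<longleftrightarrow> (\<forall>K. compact K \<and> K \<subseteq> U \<longrightarrow> set_integrable lborel K f)"

definition weak_deriv :: "real set \<Rightarrow> (real \<Rightarrow> real) \<Rightarrow> (real \<Rightarrow> real) \<Rightarrow> bool" where
  "weak_deriv U f g \<longleftrightarrow> loc_integrable U f \<and> loc_integrable U g \<and>
     (\<forall>\<phi>. test_fun U \<phi> \<longrightarrow>
        (LINT x|lborel. f x * deriv \<phi> x) = - (LINT x|lborel. g x * \<phi> x))"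

definition L2_on :: "real set \<Rightarrow> (real \<Rightarrow> real) \<Rightarrow> bool" where
  "L2_on U f \<longleftrightarrow> f \<in> borel_measurable lborel \<and> set_integrable lborel U (\<lambda>x. (f x)\<^sup>2)"

definition H1 :: "(real \<Rightarrow> real) \<Rightarrow> bool" where
  "H1 f \<longleftrightarrow> L2_on UNIV f \<and> (\<exists>g. L2_on UNIV g \<and> weak_deriv UNIV f g)"

definition H2_punct_with :: "(real \<Rightarrow> real) \<Rightarrow> (real \<Rightarrow> real) \<Rightarrow> bool" where
  "H2_punct_with f h \<longleftrightarrow> L2_on (- {0}) f \<and> L2_on (- {0}) h \<and>
     (\<exists>g. L2_on (- {0}) g \<and> weak_deriv (- {0}) f g \<and> weak_deriv (- {0}) g h)"

definition Q :: "real \<Rightarrow> real \<Rightarrow> real \<Rightarrow> real \<Rightarrow> real" where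
  "Q p \<omega> \<gamma> x = ((p + 1) * \<omega> / 2 *
      (1 / cosh ((p - 1) * sqrt \<omega> / 2 * \<bar>x\<bar> + artanh (\<gamma> / (2 * sqrt \<omega>))))\<^sup>2)
      powr (1 / (p - 1))"

text \<open>Membership in D_even, for the continuous representative f (values at 0 meaningful).
  f'(0+), f'(0-) are the one-sided derivatives of this representative at 0.\<close>
definition D_even :: "real \<Rightarrow> (real \<Rightarrow> real) \<Rightarrow> bool" where
  "D_even \<gamma> f \<longleftrightarrow> continuous_on UNIV f \<and> (\<forall>x. f (- x) = f x) \<and> H1 f \<and>
     (\<exists>h. H2_punct_with f h) \<and>
     (\<exists>a b. (f has_real_derivative a) (at_right 0) \<and> (f has_real_derivative b) (at_left 0)
            \<and> a - b = - \<gamma> * f 0)"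

definition Lplus_eq :: "real \<Rightarrow> real \<Rightarrow> real \<Rightarrow> (real \<Rightarrow> real) \<Rightarrow> (real \<Rightarrow> real) \<Rightarrow> bool" where
  "Lplus_eq p \<omega> \<gamma> f k \<longleftrightarrow> (\<exists>h. H2_punct_with f h \<and>
     (AE x in lborel. x \<noteq> 0 \<longrightarrow>
        - h x + \<omega> * f x - p * (Q p \<omega> \<gamma> x) powr (p - 1) * f x = k x))"

definition Lminus_eq :: "real \<Rightarrow> real \<Rightarrow> real \<Rightarrow> (real \<Rightarrow> real) \<Rightarrow> (real \<Rightarrow> real) \<Rightarrow> bool" where
  "Lminus_eq p \<omega> \<gamma> f k \<longleftrightarrow> (\<exists>h. H2_punct_with f h \<and>
     (AE x in lborel. x \<noteq> 0 \<longrightarrow>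
        - h x + \<omega> * f x - (Q p \<omega> \<gamma> x) powr (p - 1) * f x = k x))"

end

theory Submission
  imports Defs "HOL-Computational_Algebra.Polynomial" "HOL-Real_Asymp.Real_Asymp"
begin

definition dclosed :: "real set \<Rightarrow> (real \<Rightarrow> real) set \<Rightarrow> bool" where
  "dclosed U T \<longleftrightarrow> (\<forall>t\<in>T. \<exists>t'\<in>T. \<forall>x\<in>U. (t has_real_derivative t' x) (at x))"

lemma dclosed_deriv_iter:
  assumes "open U" "dclosed U T" "f \<in> T"
  shows "\<exists>t\<in>T. \<forall>x\<in>U. (deriv ^^ n) f x = t x"
proof (induction n)
  case 0 then show ?case using assms by auto
next
  case (Suc n)
  then obtain t where t: "t \<in> T" "\<And>x. x\<in>U \<Longrightarrow> (deriv ^^ n) f x = t x" by auto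
  then obtain t' where t': "t' \<in> T" "\<And>x. x\<in>U \<Longrightarrow> (t has_real_derivative t' x) (at x)"
    using assms(2) unfolding dclosed_def by blast
  have "(deriv ^^ Suc n) f x = t' x" if "x \<in> U" for x
  proof -
    have "((deriv ^^ n) f has_real_derivative t' x) (at x)"
      using has_field_derivative_transform_within_open[OF t'(2)[OF that] assms(1) that] t(2) by metis
    then show ?thesis by (simp add: DERIV_imp_deriv)
  qed
  then show ?case using t' by blast
qed

lemma dclosed_smooth:
  assumes "open U" "dclosed U T" "f \<in> T"
  shows "smooth_on U f"
  unfolding smooth_on_def
proof (intro allI ballI)
  fix k x assume x: "x \<in> U"
  obtain t where t: "t \<in> T" "\<And>x. x\<in>U \<Longrightarrow> (deriv ^^ k) f x = t x"
    using dclosed_deriv_iter[OF assms] by blast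
  then obtain t' where t': "\<And>x. x\<in>U \<Longrightarrow> (t has_real_derivative t' x) (at x)"
    using assms(2) unfolding dclosed_def by blast
  have "((deriv ^^ k) f has_real_derivative t' x) (at x)"
    using has_field_derivative_transform_within_open[OF t'[OF x] assms(1) x] t(2) by metis
  then show "(deriv ^^ k) f differentiable at x"
    using real_differentiable_def by blast
qed

inductive_set alg :: "(real \<Rightarrow> real) set \<Rightarrow> (real \<Rightarrow> real) set" for T where
  gen: "t \<in> T \<Longrightarrow> t \<in> alg T"
| const: "(\<lambda>x. c) \<in> alg T"
| add: "f \<in> alg T \<Longrightarrow> g \<in> alg T \<Longrightarrow> (\<lambda>x. f x + g x) \<in> alg T"
| mult: "f \<in> alg T \<Longrightarrow> g \<in> alg T \<Longrightarrow> (\<lambda>x. f x * g x) \<in> alg T"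

lemma dclosed_alg:
  assumes "\<And>t. t \<in> T \<Longrightarrow> \<exists>t'\<in>alg T. \<forall>x\<in>U. (t has_real_derivative t' x) (at x)"
  shows "dclosed U (alg T)"
  unfolding dclosed_def
proof
  fix f assume "f \<in> alg T"
  then show "\<exists>t'\<in>alg T. \<forall>x\<in>U. (f has_real_derivative t' x) (at x)"
  proof induction
    case (gen t) then show ?case using assms by blast
  next
    case (const c) then show ?case by (intro bexI[of _ "\<lambda>x. 0"]) (auto intro: alg.const)
  next
    case (add f g)
    then obtain f' g' where "f' \<in> alg T" "g' \<in> alg T"
      "\<forall>x\<in>U. (f has_real_derivative f' x) (at x)" "\<forall>x\<in>U. (g has_real_derivative g' x) (at x)"
      by blast
    then show ?case by (intro bexI[of _ "\<lambda>x. f' x + g' x"]) (auto intro!: derivative_eq_intros alg.add)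
  next
    case (mult f g)
    then obtain f' g' where "f' \<in> alg T" "g' \<in> alg T"
      "\<forall>x\<in>U. (f has_real_derivative f' x) (at x)" "\<forall>x\<in>U. (g has_real_derivative g' x) (at x)"
      by blast
    then show ?case
      by (intro bexI[of _ "\<lambda>x. f' x * g x + f x * g' x"]) (auto intro!: derivative_eq_intros alg.add alg.mult mult.hyps)
  qed
qed

lemma alg_mono: "f \<in> alg T \<Longrightarrow> T \<subseteq> S \<Longrightarrow> f \<in> alg S"
  by (induction rule: alg.induct) (auto intro: alg.intros)

lemma alg_alg: "f \<in> alg (alg T) \<Longrightarrow> f \<in> alg T"
  by (induction rule: alg.induct) (auto intro: alg.intros)

lemma dclosed_affine:
  assumes "dclosed UNIV T"
  shows "dclosed UNIV {(\<lambda>x. c * t (a * x + b)) | c a b t. t \<in> T}"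
  unfolding dclosed_def
proof safe
  fix c a b t assume t: "t \<in> T"
  then obtain t' where t': "t' \<in> T" "\<And>x. (t has_real_derivative t' x) (at x)"
    using assms unfolding dclosed_def by blast
  have D: "((\<lambda>x. c * t (a * x + b)) has_real_derivative (c * a) * t' (a * x + b)) (at x)" for x
  proof -
    have d: "((\<lambda>x. a*x+b) has_real_derivative a) (at x)" by (auto intro!: derivative_eq_intros)
    have "((\<lambda>x. t (a*x+b)) has_real_derivative t' (a*x+b) * a) (at x)" using DERIV_chain2[OF t'(2) d] .
    from DERIV_cmult[OF this, of c] show ?thesis by (simp add: algebra_simps)
  qed
  show "\<exists>t''\<in>{(\<lambda>x. c * t (a * x + b)) | c a b t. t \<in> T}.
       \<forall>x\<in>UNIV. ((\<lambda>x. c * t (a * x + b)) has_real_derivative t'' x) (at x)"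
  proof (rule bexI[where x="\<lambda>x. (c*a) * t' (a*x+b)"])
    show "\<forall>x\<in>UNIV. ((\<lambda>x. c * t (a * x + b)) has_real_derivative (c*a) * t' (a*x+b)) (at x)"
      using D by simp
    show "(\<lambda>x. (c*a) * t' (a*x+b)) \<in> {(\<lambda>x. c * t (a * x + b)) | c a b t. t \<in> T}"
      using t'(1) by blast
  qed
qed

lemma dclosed_insert:
  assumes "dclosed U T" "t \<in> T" "\<And>x. x \<in> U \<Longrightarrow> (G has_real_derivative t x) (at x)"
  shows "dclosed U (insert G T)"
  using assms unfolding dclosed_def by blast


lemma poly_exp_lim_aux: "((\<lambda>y::real. y ^ n * poly P y * exp (- y)) \<longlongrightarrow> 0) at_top"
proof (induction P arbitrary: n rule: pCons_induct)
  case 0 then show ?case by simp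
next
  case (pCons a P)
  have e: "(\<lambda>y::real. y ^ n * poly (pCons a P) y * exp (- y)) =
      (\<lambda>y. a * (y ^ n * exp (- y)) + y ^ Suc n * poly P y * exp (- y))"
    by (auto simp: algebra_simps)
  have l1: "((\<lambda>y::real. y ^ n * exp (- y)) \<longlongrightarrow> 0) at_top" by real_asymp
  show ?case unfolding e using tendsto_add[OF tendsto_mult_right_zero[OF l1] pCons.IH[of "Suc n"]] by simp
qed

lemma poly_exp_lim: "((\<lambda>x::real. poly P (1/x) * exp (- (1/x))) \<longlongrightarrow> 0) (at_right 0)"
proof -
  have "((\<lambda>y::real. poly P y * exp (- y)) \<longlongrightarrow> 0) at_top"
    using poly_exp_lim_aux[of 0 P] by simp
  from filterlim_compose[OF this filterlim_inverse_at_top_right]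
  show ?thesis by (simp add: inverse_eq_divide o_def)
qed

definition psiF :: "real poly \<Rightarrow> real \<Rightarrow> real" where
  "psiF P x = (if x > 0 then poly P (1/x) * exp (- (1/x)) else 0)"

definition psiD :: "real poly \<Rightarrow> real poly" where
  "psiD P = [:0,0,1:] * (P - pderiv P)"

lemma psiF_deriv_pos:
  assumes "x > 0"
  shows "((\<lambda>x. poly P (1/x) * exp (- (1/x))) has_real_derivative psiF (psiD P) x) (at x)"
proof -
  have d1: "((\<lambda>x. 1/x) has_real_derivative - (1/x^2)) (at x)"
    using assms by (auto intro!: derivative_eq_intros simp: power2_eq_square field_simps)
  have d2: "((\<lambda>x. poly P (1/x)) has_real_derivative poly (pderiv P) (1/x) * - (1/x^2)) (at x)"
    using DERIV_chain2[OF poly_DERIV d1] .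
  have d3: "((\<lambda>x. exp (- (1/x))) has_real_derivative exp (- (1/x)) * (1/x^2)) (at x)"
    using DERIV_chain2[OF DERIV_exp DERIV_minus[OF d1]] by simp
  have eq: "poly (pderiv P) (1/x) * - (1/x^2) * exp (- (1/x)) + exp (- (1/x)) * (1/x^2) * poly P (1/x)
      = psiF (psiD P) x"
    using assms by (simp add: psiF_def psiD_def algebra_simps power2_eq_square)
  show ?thesis by (rule DERIV_cong[OF DERIV_mult[OF d2 d3] eq])
qed

lemma psiF_deriv: "(psiF P has_real_derivative psiF (psiD P) x) (at x)"
proof (cases "x > 0")
  case True
  show ?thesis
    apply (rule has_field_derivative_transform_within_open[OF psiF_deriv_pos[OF True], of "{0<..}"])
    using True by (auto simp: psiF_def)
next
  case False
  show ?thesis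
  proof (cases "x < 0")
    case True
    have "((\<lambda>x. 0) has_real_derivative 0) (at x)" by simp
    then have "(psiF P has_real_derivative 0) (at x)"
      by (rule has_field_derivative_transform_within_open[of _ _ _ "{..<0}"]) (use True in \<open>auto simp: psiF_def\<close>)
    then show ?thesis using True by (simp add: psiF_def)
  next
    case False
    with \<open>\<not> x > 0\<close> have x0: "x = 0" by simp
    have "((\<lambda>h. (psiF P (0 + h) - psiF P 0) / h) \<longlongrightarrow> 0) (at 0)"
    proof (rule filterlim_split_at)
      show "((\<lambda>h. (psiF P (0 + h) - psiF P 0) / h) \<longlongrightarrow> 0) (at_left 0)"
      proof (rule tendsto_eventually)
        have "eventually (\<lambda>h::real. h < 0) (at_left 0)" by (auto simp: eventually_at_filter)
        then show "eventually (\<lambda>h. (psiF P (0 + h) - psiF P 0) / h = 0) (at_left 0)"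
          by eventually_elim (auto simp: psiF_def)
      qed
      have "((\<lambda>x::real. poly (pCons 0 P) (1/x) * exp (- (1/x))) \<longlongrightarrow> 0) (at_right 0)"
        by (rule poly_exp_lim)
      then show "((\<lambda>h. (psiF P (0 + h) - psiF P 0) / h) \<longlongrightarrow> 0) (at_right 0)"
      proof (rule tendsto_cong[THEN iffD1, rotated])
        have "eventually (\<lambda>h::real. h > 0) (at_right 0)" by (auto simp: eventually_at_filter)
        then show "eventually (\<lambda>h. poly (pCons 0 P) (1/h) * exp (- (1/h)) = (psiF P (0 + h) - psiF P 0) / h) (at_right 0)"
          by eventually_elim (auto simp: psiF_def)
      qed
    qed
    then show ?thesis using x0 by (simp add: DERIV_def psiF_def)
  qed
qed

definition psiT :: "(real \<Rightarrow> real) set" where "psiT = range psiF"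

lemma dclosed_psiT: "dclosed UNIV psiT"
  unfolding dclosed_def psiT_def using psiF_deriv by blast

definition psi :: "real \<Rightarrow> real" where "psi = psiF 1"

lemma psi_eq: "psi x = (if x > 0 then exp (- (1/x)) else 0)"
  by (simp add: psi_def psiF_def)

definition rho :: "real \<Rightarrow> real" where "rho x = psi (1 * x + 1) * psi ((-1) * x + 1)"

definition rhoT :: "(real \<Rightarrow> real) set" where
  "rhoT = alg {(\<lambda>x. c * t (a * x + b)) | c a b t. t \<in> psiT}"

lemma dclosed_rhoT: "dclosed UNIV rhoT"
  unfolding rhoT_def
  apply (rule dclosed_alg)
  subgoal for t
    using dclosed_affine[OF dclosed_psiT] unfolding dclosed_def by (meson alg.gen)
  done

lemma rho_in: "rho \<in> rhoT"
proof -
  have "(\<lambda>x. 1 * psi (1 * x + 1)) \<in> {(\<lambda>x. c * t (a * x + b)) | c a b t. t \<in> psiT}"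
    unfolding psiT_def psi_def by blast
  moreover have "(\<lambda>x. 1 * psi ((-1) * x + 1)) \<in> {(\<lambda>x. c * t (a * x + b)) | c a b t. t \<in> psiT}"
    unfolding psiT_def psi_def by blast
  ultimately have "(\<lambda>x. (1 * psi (1 * x + 1)) * (1 * psi ((-1) * x + 1))) \<in> rhoT"
    unfolding rhoT_def by (intro alg.mult alg.gen)
  then show ?thesis unfolding rho_def[abs_def] by simp
qed

lemma rho_deriv: "\<exists>r'. (rho has_real_derivative r') (at x)"
  using dclosed_rhoT rho_in unfolding dclosed_def by blast

lemma rho_cont: "continuous_on UNIV rho"
  using rho_deriv by (meson DERIV_continuous continuous_at_imp_continuous_on)

lemma rho_nonneg: "rho x \<ge> 0"
  by (simp add: rho_def psi_eq)

lemma rho_zero: "\<bar>x\<bar> \<ge> 1 \<Longrightarrow> rho x = 0"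
  by (cases "x \<ge> 0") (auto simp: rho_def psi_eq)

lemma rho_pos_lb: "\<bar>x\<bar> \<le> 1/2 \<Longrightarrow> rho x \<ge> exp (-4)"
proof -
  assume a: "\<bar>x\<bar> \<le> 1/2"
  then have p1: "1 + x \<ge> 1/2" "1 - x \<ge> 1/2" by auto
  have "1/(1+x) \<le> 2" "1/(1-x) \<le> 2" using p1 by (auto simp: field_simps)
  then have "exp (-4) \<le> exp (- (1/(1+x))) * exp (- (1/(1-x)))"
    by (simp add: exp_add[symmetric])
  then show ?thesis using p1 by (simp add: rho_def psi_eq add.commute)
qed


lemma antideriv:
  fixes g :: "real \<Rightarrow> real" and a x :: real
  assumes g: "continuous_on UNIV g" and z: "\<And>x. x \<le> a \<Longrightarrow> g x = 0"
  shows "((\<lambda>x. integral {a-1..x} g) has_real_derivative g x) (at x)"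
proof (cases "x < a")
  case True
  have "((\<lambda>x. 0) has_real_derivative 0) (at x)" by simp
  then have "((\<lambda>x. integral {a-1..x} g) has_real_derivative 0) (at x)"
  proof (rule has_field_derivative_transform_within_open[of _ _ _ "{..<a}"])
    fix y :: real assume "y \<in> {..<a}"
    then have "integral {a-1..y} g = integral {a-1..y} (\<lambda>_. 0)"
      by (intro integral_cong) (auto intro: z)
    then show "0 = integral {a-1..y} g" by simp
  qed (use True in auto)
  then show ?thesis using True z by simp
next
  case False
  have "((\<lambda>x. integral {a-1..x} g) has_real_derivative g x) (at x within {a-1..x+1})"
    by (rule integral_has_real_derivative) (use False g in \<open>auto intro: continuous_on_subset\<close>)
  moreover have "at x within {a-1..x+1} = at x"
    by (rule at_within_interior) (use False in auto)
  ultimately show ?thesis by simp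
qed

lemma antideriv_zero:
  fixes g :: "real \<Rightarrow> real" and a x :: real
  assumes z: "\<And>x. x \<le> a \<Longrightarrow> g x = 0" and "x \<le> a"
  shows "integral {a-1..x} g = 0"
proof -
  have "g y = 0" if "y \<in> {a-1..x}" for y
  proof -
    have "y \<le> a" using that assms(2) by auto
    then show ?thesis by (rule z)
  qed
  then have "integral {a-1..x} g = integral {a-1..x} (\<lambda>_. 0)"
    by (intro integral_cong) auto
  then show ?thesis by simp
qed

definition R1 :: "real \<Rightarrow> real" where "R1 x = integral {-2..x} rho"
definition R2 :: "real \<Rightarrow> real" where "R2 x = integral {-2..x} R1"

lemma R1_deriv: "(R1 has_real_derivative rho x) (at x)"
  using antideriv[of rho "-1" x] rho_cont rho_zero unfolding R1_def by force

lemma R1_cont: "continuous_on UNIV R1"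
  using R1_deriv by (meson DERIV_continuous continuous_at_imp_continuous_on)

lemma R1_zero: "x \<le> -1 \<Longrightarrow> R1 x = 0"
  using antideriv_zero[of "-1" rho x] rho_zero unfolding R1_def by force

lemma R2_deriv: "(R2 has_real_derivative R1 x) (at x)"
  using antideriv[of R1 "-1" x] R1_cont R1_zero unfolding R2_def by force

lemma R2_zero: "x \<le> -1 \<Longrightarrow> R2 x = 0"
  using antideriv_zero[of "-1" R1 x] R1_zero unfolding R2_def by force

definition mrho :: real where "mrho = R1 1"

lemma R1_one: assumes "x \<ge> 1" shows "R1 x = mrho"
proof -
  have i: "rho integrable_on {-2..x}" by (rule integrable_continuous_interval) (use rho_cont continuous_on_subset in blast)
  have "integral {-2..1} rho + integral {1..x} rho = integral {-2..x} rho"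
    using Henstock_Kurzweil_Integration.integral_combine[where a="-2" and c=1 and b=x and f=rho] i assms by auto
  moreover have "integral {1..x} rho = integral {1..x} (\<lambda>_. 0)"
    by (intro integral_cong) (auto intro: rho_zero)
  ultimately show ?thesis by (simp add: R1_def mrho_def)
qed

lemma R2_one: assumes "x \<ge> 1" shows "R2 x = R2 1 + mrho * (x - 1)"
proof -
  have i: "R1 integrable_on {-2..x}" by (rule integrable_continuous_interval) (use R1_cont continuous_on_subset in blast)
  have "integral {-2..1} R1 + integral {1..x} R1 = integral {-2..x} R1"
    using Henstock_Kurzweil_Integration.integral_combine[where a="-2" and c=1 and b=x and f=R1] i assms by auto
  moreover have "integral {1..x} R1 = integral {1..x} (\<lambda>_. mrho)"
    by (intro integral_cong) (auto intro: R1_one)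
  ultimately show ?thesis using assms by (simp add: R2_def mult.commute)
qed

lemma mrho_pos: "mrho > 0"
proof -
  have c: "continuous_on S rho" for S using rho_cont continuous_on_subset by blast
  have "integral {-1/2..1/2::real} (\<lambda>_. exp (-4)) \<le> integral {-1/2..1/2} rho"
    by (rule integral_le) (auto intro!: integrable_continuous_interval c rho_pos_lb)
  also have "\<dots> \<le> integral {-2..1} rho"
    by (rule integral_subset_le) (auto intro!: integrable_continuous_interval c rho_nonneg)
  finally have "exp (-4) \<le> integral {-2..1} rho" by simp
  moreover have "exp (-4::real) > 0" by simp
  ultimately show ?thesis unfolding mrho_def R1_def by linarith
qed

definition RT :: "(real \<Rightarrow> real) set" where
  "RT = alg {(\<lambda>x. c * t (a * x + b)) | c a b t. t \<in> insert R2 (insert R1 rhoT)}"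

lemma dclosed_RT: "dclosed UNIV RT"
proof -
  have d1: "dclosed UNIV (insert R1 rhoT)"
    by (rule dclosed_insert[OF dclosed_rhoT rho_in]) (use R1_deriv in auto)
  have d2: "dclosed UNIV (insert R2 (insert R1 rhoT))"
    by (rule dclosed_insert[OF d1]) (use R2_deriv in auto)
  show ?thesis
    unfolding RT_def
    apply (rule dclosed_alg)
    subgoal for t
      using dclosed_affine[OF d2] unfolding dclosed_def by (meson alg.gen)
    done
qed


definition tphi :: "real \<Rightarrow> real \<Rightarrow> real \<Rightarrow> real \<Rightarrow> real \<Rightarrow> real" where
  "tphi a b c e = (\<lambda>x. ((c-b)*e^2) * R2 ((1/e)*x + (-a/e)) + ((-(c-a))*e^2) * R2 ((1/e)*x + (-b/e))
      + ((b-a)*e^2) * R2 ((1/e)*x + (-c/e)))"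

definition tphi1 :: "real \<Rightarrow> real \<Rightarrow> real \<Rightarrow> real \<Rightarrow> real \<Rightarrow> real" where
  "tphi1 a b c e = (\<lambda>x. ((c-b)*e) * R1 ((x - a)/e) - ((c-a)*e) * R1 ((x-b)/e)
      + ((b-a)*e) * R1 ((x-c)/e))"

definition tphi2 :: "real \<Rightarrow> real \<Rightarrow> real \<Rightarrow> real \<Rightarrow> real \<Rightarrow> real" where
  "tphi2 a b c e = (\<lambda>x. (c-b) * rho ((x - a)/e) - (c-a) * rho ((x-b)/e)
      + (b-a) * rho ((x-c)/e))"

lemma chainR: 
  assumes "\<And>y. (f has_real_derivative f' y) (at y)" "e \<noteq> 0"
  shows "((\<lambda>x. f ((1/e)*x + (-p/e))) has_real_derivative f' ((x-p)/e) / e) (at x)"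
proof -
  have d: "((\<lambda>x. (1/e)*x + (-p/e)) has_real_derivative 1/e) (at x)" using assms(2) by (auto intro!: derivative_eq_intros)
  have "(1/e)*x + (-p/e) = (x-p)/e" using assms(2) by (simp add: diff_divide_distrib)
  then show ?thesis using DERIV_chain2[OF assms(1) d] by (simp add: divide_inverse mult.commute)
qed

lemma aux1: "e \<noteq> 0 \<Longrightarrow> C * e^2 * (z / e) = (C*e) * (z::real)"
  by (simp add: power2_eq_square)

lemma aux1': "e \<noteq> 0 \<Longrightarrow> C * e^2 * z / e = (C*e) * (z::real)"
  by (simp add: power2_eq_square)

lemma aux2: "e \<noteq> 0 \<Longrightarrow> (C * e) * (z / e) = C * (z::real)"
  by simp

lemma aux2': "e \<noteq> 0 \<Longrightarrow> C * e * z / e = C * (z::real)"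
  by simp

lemma tphi_deriv: "e \<noteq> 0 \<Longrightarrow> (tphi a b c e has_real_derivative tphi1 a b c e x) (at x)"
proof -
  assume e: "e \<noteq> 0"
  have 1: "((\<lambda>x. R2 ((1/e)*x + (-p/e))) has_real_derivative R1 ((x-p)/e) / e) (at x)" for p
    by (rule chainR[OF R2_deriv e])
  show ?thesis unfolding tphi_def tphi1_def
    apply (rule DERIV_cong)
     apply (rule DERIV_add[OF DERIV_add[OF DERIV_cmult[OF 1] DERIV_cmult[OF 1]] DERIV_cmult[OF 1]])
    using e by (simp add: aux1 aux1') (simp add: algebra_simps)
qed

lemma tphi1_deriv: "e \<noteq> 0 \<Longrightarrow> (tphi1 a b c e has_real_derivative tphi2 a b c e x) (at x)"
proof -
  assume e: "e \<noteq> 0"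
  have 1: "((\<lambda>x. R1 ((x-p)/e)) has_real_derivative rho ((x-p)/e) / e) (at x)" for p
  proof -
    have "(\<lambda>x. R1 ((x-p)/e)) = (\<lambda>x. R1 ((1/e)*x + (-p/e)))" by (simp add: diff_divide_distrib)
    then show ?thesis using chainR[OF R1_deriv e] by simp
  qed
  show ?thesis unfolding tphi1_def tphi2_def
    apply (rule DERIV_cong)
     apply (rule DERIV_add[OF DERIV_diff[OF DERIV_cmult[OF 1] DERIV_cmult[OF 1]] DERIV_cmult[OF 1]])
    using e by (simp add: aux2 aux2')
qed

lemma tphi_dd: "e \<noteq> 0 \<Longrightarrow> deriv (deriv (tphi a b c e)) = tphi2 a b c e"
proof -
  assume e: "e \<noteq> 0"
  have "deriv (tphi a b c e) = tphi1 a b c e" using tphi_deriv[OF e] by (auto intro!: ext DERIV_imp_deriv)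
  moreover have "deriv (tphi1 a b c e) = tphi2 a b c e" using tphi1_deriv[OF e] by (auto intro!: ext DERIV_imp_deriv)
  ultimately show ?thesis by simp
qed

lemma tphi_smooth: "smooth_on UNIV (tphi a b c e)"
proof (rule dclosed_smooth[OF open_UNIV dclosed_RT])
  let ?G = "{(\<lambda>x. c * t (a * x + b)) | c a b t. t \<in> insert R2 (insert R1 rhoT)}"
  have g: "(\<lambda>x. C * R2 ((1/e)*x + (-p/e))) \<in> alg ?G" for C p
    by (rule alg.gen) blast
  show "tphi a b c e \<in> RT"
    using alg.add[OF alg.add[OF g[of "(c-b)*e^2" a] g[of "(-(c-a))*e^2" b]] g[of "(b-a)*e^2" c]]
    unfolding RT_def tphi_def by simp
qed

lemma tphi_vanish:
  assumes "a < b" "b < c" "e > 0" "x \<le> a - e \<or> x \<ge> c + e"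
  shows "tphi a b c e x = 0" "tphi1 a b c e x = 0"
proof -
  have "tphi a b c e x = 0 \<and> tphi1 a b c e x = 0"
  proof (cases "x \<le> a - e")
    case True
    have "(1/e)*x + (-p/e) \<le> -1" if "p \<ge> a" for p using True that assms by (simp add: field_simps)
    then have z2: "R2 ((1/e)*x + (-p/e)) = 0" if "p \<ge> a" for p using R2_zero that by blast
    have "(x-p)/e \<le> -1" if "p \<ge> a" for p using True that assms by (simp add: field_simps)
    then have z1: "R1 ((x-p)/e) = 0" if "p \<ge> a" for p using R1_zero that by blast
    have "a \<le> a" "a \<le> b" "a \<le> c" using assms by auto
    note zz = z1[OF this(1)] z1[OF this(2)] z1[OF this(3)] z2[OF this(1)] z2[OF this(2)] z2[OF this(3)]
    show ?thesis unfolding tphi_def tphi1_def by (simp only: zz) simp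
  next
    case False
    then have x: "x \<ge> c + e" using assms by auto
    have 1: "(1/e)*x + (-p/e) \<ge> 1" if "p \<le> c" for p using x that assms by (simp add: field_simps)
    have 2: "(x-p)/e \<ge> 1" if "p \<le> c" for p using x that assms by (simp add: field_simps)
    have "tphi a b c e x = ((c-b)*e^2) * (R2 1 + mrho * ((1/e)*x + (-a/e) - 1))
       + ((-(c-a))*e^2) * (R2 1 + mrho * ((1/e)*x + (-b/e) - 1))
       + ((b-a)*e^2) * (R2 1 + mrho * ((1/e)*x + (-c/e) - 1))"
      unfolding tphi_def using R2_one[OF 1[of a]] R2_one[OF 1[of b]] R2_one[OF 1[of c]] assms by simp
    also have "\<dots> = e^2 * (R2 1 - mrho) * ((c-b) - (c-a) + (b-a)) + e*mrho*((c-b)*(x-a) - (c-a)*(x-b) + (b-a)*(x-c))"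
      using assms by (simp add: field_simps power2_eq_square)
    also have "\<dots> = 0" by (simp add: algebra_simps)
    finally have A: "tphi a b c e x = 0" .
    have "tphi1 a b c e x = ((c-b)*e) * mrho - ((c-a)*e) * mrho + ((b-a)*e) * mrho"
      unfolding tphi1_def using R1_one[OF 2[of a]] R1_one[OF 2[of b]] R1_one[OF 2[of c]] assms by simp
    also have "\<dots> = 0" by (simp add: field_simps)
    finally show ?thesis using A by simp
  qed
  then show "tphi a b c e x = 0" "tphi1 a b c e x = 0" by auto
qed

lemma tphi_test:
  assumes "a < b" "b < c" "e > 0" "l < a - e" "c + e < r"
  shows "test_fun {l<..<r} (tphi a b c e)"
proof -
  have sub: "{x. tphi a b c e x \<noteq> 0} \<subseteq> {a-e..c+e}"
  proof
    fix x assume "x \<in> {x. tphi a b c e x \<noteq> 0}"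
    then show "x \<in> {a-e..c+e}" using tphi_vanish(1)[OF assms(1-3), of x] by fastforce
  qed
  then have "closure {x. tphi a b c e x \<noteq> 0} \<subseteq> {a-e..c+e}"
    by (simp add: closure_minimal)
  moreover have "compact (closure {x. tphi a b c e x \<noteq> 0})"
    using sub by (meson bounded_closed_interval bounded_subset compact_closure)
  ultimately show ?thesis unfolding test_fun_def using tphi_smooth assms by auto
qed


lemma lint_to_int:
  fixes g :: "real \<Rightarrow> real"
  assumes "continuous_on UNIV g" "\<And>x. x \<notin> {a..b} \<Longrightarrow> g x = 0"
  shows "(LINT x|lborel. g x) = integral {a..b} g"
proof -
  have e: "(\<lambda>x. indicator {a..b} x *\<^sub>R g x) = g"
    by (rule ext) (use assms(2) in \<open>auto simp: indicator_def\<close>)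
  have "integrable lborel (\<lambda>x. indicator {a..b} x *\<^sub>R g x)"
    by (rule borel_integrable_compact) (use assms(1) continuous_on_subset in auto)
  then have si: "set_integrable lborel {a..b} g" by (simp add: set_integrable_def)
  have "(LINT x|lborel. g x) = (LINT x:{a..b}|lborel. g x)"
    unfolding set_lebesgue_integral_def e ..
  also have "\<dots> = integral {a..b} g" by (rule set_borel_integral_eq_integral(2)[OF si])
  finally show ?thesis .
qed

lemma cont_rho_comp: "continuous_on UNIV (\<lambda>x. rho ((x - p) / e))"
proof -
  have "(\<lambda>x. rho ((x - p) / e)) = (\<lambda>x. rho ((x - p) * (inverse e)))" by (simp add: divide_inverse)
  moreover have "continuous_on UNIV (\<lambda>x. rho ((x - p) * c))" for c
    by (rule continuous_on_compose2[OF rho_cont]) (auto intro!: continuous_intros)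
  ultimately show ?thesis by (metis (no_types) divide_inverse)
qed

lemma tphi2_cont: "continuous_on UNIV (tphi2 a b c e)"
  unfolding tphi2_def by (intro continuous_intros cont_rho_comp)

lemma tphi_cont: "e \<noteq> 0 \<Longrightarrow> continuous_on UNIV (tphi a b c e)"
  using tphi_deriv by (meson DERIV_continuous continuous_at_imp_continuous_on)

lemma tphi1_cont: "e \<noteq> 0 \<Longrightarrow> continuous_on UNIV (tphi1 a b c e)"
  using tphi1_deriv by (meson DERIV_continuous continuous_at_imp_continuous_on)

lemma rho_comp_zero: "e > 0 \<Longrightarrow> \<bar>x - p\<bar> \<ge> e \<Longrightarrow> rho ((x - p) / e) = 0"
  by (rule rho_zero) (simp add: abs_divide field_simps)

lemma tphi2_vanish:
  assumes "a < b" "b < c" "e > 0" "x \<notin> {a-e..c+e}"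
  shows "tphi2 a b c e x = 0"
proof -
  have "\<bar>x - p\<bar> \<ge> e" if "a \<le> p" "p \<le> c" for p using assms that by auto
  then show ?thesis unfolding tphi2_def using assms by (simp add: rho_comp_zero)
qed

lemma rho_comp_int:
  assumes "e > 0" "\<alpha> \<le> p - e" "p + e \<le> \<beta>"
  shows "integral {\<alpha>..\<beta>} (\<lambda>x. rho ((x - p) / e)) = e * mrho"
proof -
  have d: "((\<lambda>x. e * R1 ((x - p) / e)) has_real_derivative rho ((x - p) / e)) (at x)" for x
  proof -
    have "((\<lambda>x. R1 ((1/e)*x + (-p/e))) has_real_derivative rho ((x-p)/e) / e) (at x)"
      by (rule chainR[OF R1_deriv]) (use assms in auto)
    moreover have "(\<lambda>x. R1 ((x-p)/e)) = (\<lambda>x. R1 ((1/e)*x + (-p/e)))" by (simp add: diff_divide_distrib)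
    ultimately have "((\<lambda>x. R1 ((x-p)/e)) has_real_derivative rho ((x-p)/e) / e) (at x)" by simp
    from DERIV_cmult[OF this, of e] show ?thesis using assms by simp
  qed
  have "((\<lambda>x. rho ((x - p) / e)) has_integral (e * R1 ((\<beta> - p)/e) - e * R1 ((\<alpha> - p)/e))) {\<alpha>..\<beta>}"
    apply (rule fundamental_theorem_of_calculus)
    using assms apply simp
    using d by (auto simp: has_real_derivative_iff_has_vector_derivative[symmetric] intro: DERIV_subset)
  moreover have "R1 ((\<beta> - p)/e) = mrho" by (rule R1_one) (use assms in \<open>simp add: field_simps\<close>)
  moreover have "R1 ((\<alpha> - p)/e) = 0" by (rule R1_zero) (use assms in \<open>simp add: field_simps\<close>)
  ultimately show ?thesis by (simp add: integral_unique)
qed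


lemma three_point:
  fixes w :: "real \<Rightarrow> real"
  assumes lab: "l < a" "a < b" "b < c" "c < r"
    and cw: "continuous_on {l..r} w"
    and Hw: "\<And>e. e > 0 \<Longrightarrow> l < a - e \<Longrightarrow> c + e < r \<Longrightarrow>
               integral {a-e..c+e} (\<lambda>x. w x * tphi2 a b c e x) = 0"
  shows "(c-b)*w a - (c-a)*w b + (b-a)*w c = 0"
proof -
  define E where "E = (c-b)*w a - (c-a)*w b + (b-a)*w c"
  define S where "S = \<bar>c-b\<bar> + \<bar>c-a\<bar> + \<bar>b-a\<bar>"
  have S0: "S \<ge> 0" unfolding S_def by simp
  have bound: "\<bar>E\<bar> \<le> S * \<eta>" if eta: "\<eta> > 0" for \<eta>
  proof -
    have cont: "\<exists>d>0. \<forall>x\<in>{l..r}. dist x p < d \<longrightarrow> dist (w x) (w p) < \<eta>" if "p \<in> {l..r}" for p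
      using cw eta that unfolding continuous_on_iff by blast
    obtain da where da: "da > 0" "\<And>x. x\<in>{l..r} \<Longrightarrow> dist x a < da \<Longrightarrow> dist (w x) (w a) < \<eta>"
      using cont[of a] lab by auto
    obtain db where db: "db > 0" "\<And>x. x\<in>{l..r} \<Longrightarrow> dist x b < db \<Longrightarrow> dist (w x) (w b) < \<eta>"
      using cont[of b] lab by auto
    obtain dc where dc: "dc > 0" "\<And>x. x\<in>{l..r} \<Longrightarrow> dist x c < dc \<Longrightarrow> dist (w x) (w c) < \<eta>"
      using cont[of c] lab by auto
    define e where "e = Min {da/2, db/2, dc/2, (a-l)/2, (r-c)/2}"
    have e0: "e > 0" unfolding e_def using da db dc lab by simp
    have ele: "e \<le> da/2" "e \<le> db/2" "e \<le> dc/2" "e \<le> (a-l)/2" "e \<le> (r-c)/2" unfolding e_def by (auto simp: min_def)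
    have el: "l < a - e" "c + e < r" using ele lab e0 by auto
    define \<alpha> where "\<alpha> = a - e"
    define \<beta> where "\<beta> = c + e"
    define I where "I p = integral {\<alpha>..\<beta>} (\<lambda>x. w x * rho ((x - p) / e))" for p
    have cwab: "continuous_on {\<alpha>..\<beta>} w" by (rule continuous_on_subset[OF cw]) (use el lab in \<open>auto simp: \<alpha>_def \<beta>_def\<close>)
    have crho: "continuous_on {\<alpha>..\<beta>} (\<lambda>x. rho ((x - p) / e))" for p
      using cont_rho_comp continuous_on_subset by blast
    have int1: "(\<lambda>x. w x * rho ((x - p) / e)) integrable_on {\<alpha>..\<beta>}" for p
      by (rule integrable_continuous_interval) (intro continuous_intros cwab crho)
    have int2: "(\<lambda>x. rho ((x - p) / e)) integrable_on {\<alpha>..\<beta>}" for p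
      by (rule integrable_continuous_interval) (rule crho)
    have "integral {\<alpha>..\<beta>} (\<lambda>x. w x * tphi2 a b c e x) =
        integral {\<alpha>..\<beta>} (\<lambda>x. (c-b) * (w x * rho ((x - a) / e)) - (c-a) * (w x * rho ((x - b) / e))
            + (b-a) * (w x * rho ((x - c) / e)))"
      by (rule integral_cong) (simp add: tphi2_def algebra_simps)
    also have "\<dots> = (c-b) * I a - (c-a) * I b + (b-a) * I c"
      unfolding I_def
      by (subst integral_add, (intro integrable_diff integrable_on_mult_right int1)+,
          subst integral_diff, (intro integrable_on_mult_right int1)+) simp
    finally have sumI: "(c-b) * I a - (c-a) * I b + (b-a) * I c = 0"
      using Hw[OF e0 el] by (simp add: \<alpha>_def \<beta>_def)
    have Ip: "\<bar>I p - w p * (e * mrho)\<bar> \<le> \<eta> * (e * mrho)"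
      if p: "p \<in> {a,b,c}" and dp: "\<And>x. x\<in>{l..r} \<Longrightarrow> dist x p < 2 * e \<Longrightarrow> dist (w x) (w p) < \<eta>" for p
    proof -
      have pin: "\<alpha> \<le> p - e" "p + e \<le> \<beta>" using p lab by (auto simp: \<alpha>_def \<beta>_def)
      have ri: "integral {\<alpha>..\<beta>} (\<lambda>x. rho ((x - p) / e)) = e * mrho"
        by (rule rho_comp_int[OF e0 pin])
      have "I p - w p * (e * mrho) = integral {\<alpha>..\<beta>} (\<lambda>x. (w x - w p) * rho ((x - p) / e))"
        unfolding I_def ri[symmetric]
        by (subst integral_mult[OF int2], subst integral_diff[symmetric])
           (auto intro: int1 integrable_on_mult_right int2 simp: algebra_simps)
      also have "\<bar>\<dots>\<bar> \<le> integral {\<alpha>..\<beta>} (\<lambda>x. \<eta> * rho ((x - p) / e))"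
      proof -
        have i1: "(\<lambda>x. (w x - w p) * rho ((x - p) / e)) integrable_on {\<alpha>..\<beta>}"
          by (rule integrable_continuous_interval) (intro continuous_intros cwab crho)
        have i2: "(\<lambda>x. \<eta> * rho ((x - p) / e)) integrable_on {\<alpha>..\<beta>}"
          by (intro integrable_on_mult_right int2)
        have hb: "norm ((w x - w p) * rho ((x - p) / e)) \<le> \<eta> * rho ((x - p) / e)"
          if x: "x \<in> {\<alpha>..\<beta>}" for x
        proof (cases "\<bar>x - p\<bar> < e")
          case True
          have "x \<in> {l..r}" using x el by (auto simp: \<alpha>_def \<beta>_def)
          moreover have "dist x p < 2 * e" using True e0 by (simp add: dist_real_def)
          ultimately have "\<bar>w x - w p\<bar> < \<eta>" using dp by (simp add: dist_real_def)
          then show ?thesis using rho_nonneg[of "(x - p) / e"]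
            by (simp add: abs_mult mult_right_mono)
        next
          case False
          then show ?thesis using rho_comp_zero[OF e0, of x p] by simp
        qed
        from integral_norm_bound_integral[OF i1 i2 hb] show ?thesis by simp
      qed
      also have "\<dots> = \<eta> * (e * mrho)" using ri int2 by simp
      finally show ?thesis .
    qed
    have dpa: "\<And>x. x\<in>{l..r} \<Longrightarrow> dist x a < 2 * e \<Longrightarrow> dist (w x) (w a) < \<eta>" using da ele by auto
    have dpb: "\<And>x. x\<in>{l..r} \<Longrightarrow> dist x b < 2 * e \<Longrightarrow> dist (w x) (w b) < \<eta>" using db ele by auto
    have dpc: "\<And>x. x\<in>{l..r} \<Longrightarrow> dist x c < 2 * e \<Longrightarrow> dist (w x) (w c) < \<eta>" using dc ele by auto
    note Ia = Ip[of a, OF _ dpa] and Ib = Ip[of b, OF _ dpb] and Ic = Ip[of c, OF _ dpc]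
    define m where "m = e * mrho"
    have m0: "m > 0" unfolding m_def using e0 mrho_pos by simp
    have "E * m = (c-b) * (w a * m - I a) - (c-a) * (w b * m - I b) + (b-a) * (w c * m - I c)"
      using sumI unfolding E_def by (simp add: algebra_simps)
    also have "\<bar>\<dots>\<bar> \<le> \<bar>c-b\<bar> * (\<eta> * m) + \<bar>c-a\<bar> * (\<eta> * m) + \<bar>b-a\<bar> * (\<eta> * m)"
    proof -
      have "\<bar>w a * m - I a\<bar> \<le> \<eta> * m" "\<bar>w b * m - I b\<bar> \<le> \<eta> * m" "\<bar>w c * m - I c\<bar> \<le> \<eta> * m"
        using Ia Ib Ic unfolding m_def by (auto simp: abs_minus_commute)
      then have "\<bar>(c-b) * (w a * m - I a)\<bar> \<le> \<bar>c-b\<bar> * (\<eta> * m)"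
        "\<bar>(c-a) * (w b * m - I b)\<bar> \<le> \<bar>c-a\<bar> * (\<eta> * m)"
        "\<bar>(b-a) * (w c * m - I c)\<bar> \<le> \<bar>b-a\<bar> * (\<eta> * m)"
        by (auto simp: abs_mult intro: mult_left_mono)
      then show ?thesis by linarith
    qed
    finally have "\<bar>E\<bar> * m \<le> (S * \<eta>) * m" using m0 by (simp add: S_def abs_mult algebra_simps)
    then show ?thesis using m0 by simp
  qed
  show ?thesis
  proof (rule ccontr)
    assume "(c-b)*w a - (c-a)*w b + (b-a)*w c \<noteq> 0"
    then have E0: "\<bar>E\<bar> > 0" unfolding E_def by simp
    have "\<bar>E\<bar> \<le> S * (\<bar>E\<bar> / (2 * (S + 1)))" using bound[of "\<bar>E\<bar> / (2 * (S + 1))"] E0 S0 by simp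
    also have "\<dots> < \<bar>E\<bar>"
    proof -
      have "S * \<bar>E\<bar> < \<bar>E\<bar> * (2 * (S + 1))" using E0 S0 by (simp add: algebra_simps) (smt (verit) mult_nonneg_nonneg)
      then show ?thesis using E0 S0 by (simp add: field_simps)
    qed
    finally show False by simp
  qed
qed


lemma LL:
  fixes f k :: "real \<Rightarrow> real"
  assumes lr: "l < r" and cf: "continuous_on UNIV f" and ck: "continuous_on UNIV k"
    and H: "\<And>\<phi>. test_fun {l<..<r} \<phi> \<Longrightarrow>
       (LINT x|lborel. f x * deriv (deriv \<phi>) x) = (LINT x|lborel. k x * \<phi> x)"
  shows "\<forall>x\<in>{l<..<r}. (f has_real_derivative deriv f x) (at x) \<and> (deriv f has_real_derivative k x) (at x)"
proof -
  define K where "K x = integral {l..x} k" for x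
  define P where "P x = integral {l..x} K" for x
  have dK: "(K has_real_derivative k x) (at x within {l..r})" if "x \<in> {l..r}" for x
    unfolding K_def[abs_def] by (rule integral_has_real_derivative) (use ck that continuous_on_subset in auto)
  have cK: "continuous_on {l..r} K"
    using dK by (meson DERIV_continuous continuous_on_eq_continuous_within)
  have dP: "(P has_real_derivative K x) (at x within {l..r})" if "x \<in> {l..r}" for x
    unfolding P_def[abs_def] by (rule integral_has_real_derivative) (use cK that in auto)
  have cP: "continuous_on {l..r} P"
    using dP by (meson DERIV_continuous continuous_on_eq_continuous_within)
  define w where "w x = f x - P x" for x
  have cw: "continuous_on {l..r} w" unfolding w_def[abs_def]
    by (intro continuous_intros cP) (use cf continuous_on_subset in blast)
  have key: "(c-b)*w a - (c-a)*w b + (b-a)*w c = 0" if abc: "l<a" "a<b" "b<c" "c<r" for a b c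
  proof (rule three_point[OF abc cw])
    fix e :: real assume e: "e > 0" "l < a - e" "c + e < r"
    define \<alpha> where "\<alpha> = a - e"
    define \<beta> where "\<beta> = c + e"
    have e0: "e \<noteq> 0" using e by simp
    have sub: "{\<alpha>..\<beta>} \<subseteq> {l..r}" using e abc by (auto simp: \<alpha>_def \<beta>_def)
    have test: "test_fun {l<..<r} (tphi a b c e)" by (rule tphi_test) (use abc e in auto)
    have 1: "(LINT x|lborel. f x * deriv (deriv (tphi a b c e)) x) = integral {\<alpha>..\<beta>} (\<lambda>x. f x * tphi2 a b c e x)"
      unfolding tphi_dd[OF e0]
      by (rule lint_to_int) (auto intro!: continuous_intros cf tphi2_cont simp: \<alpha>_def \<beta>_def tphi2_vanish[OF abc(2,3) e(1)])
    have 2: "(LINT x|lborel. k x * tphi a b c e x) = integral {\<alpha>..\<beta>} (\<lambda>x. k x * tphi a b c e x)"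
    proof (rule lint_to_int)
      show "continuous_on UNIV (\<lambda>x. k x * tphi a b c e x)" by (intro continuous_intros ck tphi_cont e0)
      fix x assume "x \<notin> {\<alpha>..\<beta>}"
      then have "x \<le> a - e \<or> x \<ge> c + e" by (auto simp: \<alpha>_def \<beta>_def)
      then show "k x * tphi a b c e x = 0" using tphi_vanish(1)[OF abc(2,3) e(1)] by simp
    qed
    have 3: "integral {\<alpha>..\<beta>} (\<lambda>x. P x * tphi2 a b c e x - k x * tphi a b c e x) = 0"
    proof -
      define G where "G x = P x * tphi1 a b c e x - K x * tphi a b c e x" for x
      have "((\<lambda>x. P x * tphi2 a b c e x - k x * tphi a b c e x) has_integral (G \<beta> - G \<alpha>)) {\<alpha>..\<beta>}"
      proof (rule fundamental_theorem_of_calculus)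
        show "\<alpha> \<le> \<beta>" using abc e by (simp add: \<alpha>_def \<beta>_def)
        fix x assume x: "x \<in> {\<alpha>..\<beta>}"
        then have xs: "x \<in> {l..r}" using sub by auto
        have d1: "(P has_real_derivative K x) (at x within {\<alpha>..\<beta>})" by (rule DERIV_subset[OF dP[OF xs] sub])
        have d3: "(K has_real_derivative k x) (at x within {\<alpha>..\<beta>})" by (rule DERIV_subset[OF dK[OF xs] sub])
        have d2: "(tphi1 a b c e has_real_derivative tphi2 a b c e x) (at x within {\<alpha>..\<beta>})"
          by (rule has_field_derivative_at_within[OF tphi1_deriv[OF e0]])
        have d4: "(tphi a b c e has_real_derivative tphi1 a b c e x) (at x within {\<alpha>..\<beta>})"
          by (rule has_field_derivative_at_within[OF tphi_deriv[OF e0]])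
        have "(G has_real_derivative (K x * tphi1 a b c e x + tphi2 a b c e x * P x)
               - (k x * tphi a b c e x + tphi1 a b c e x * K x)) (at x within {\<alpha>..\<beta>})"
          unfolding G_def[abs_def] by (rule DERIV_diff[OF DERIV_mult[OF d1 d2] DERIV_mult[OF d3 d4]])
        then show "(G has_vector_derivative (P x * tphi2 a b c e x - k x * tphi a b c e x)) (at x within {\<alpha>..\<beta>})"
          by (simp add: has_real_derivative_iff_has_vector_derivative[symmetric] algebra_simps)
      qed
      moreover have "G \<beta> = 0" "G \<alpha> = 0" unfolding G_def \<alpha>_def \<beta>_def
        using tphi_vanish[OF abc(2,3) e(1), of "c+e"] tphi_vanish[OF abc(2,3) e(1), of "a-e"] by auto
      ultimately show ?thesis by (simp add: integral_unique)
    qed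
    have ct2: "continuous_on {\<alpha>..\<beta>} (tphi2 a b c e)" by (rule continuous_on_subset[OF tphi2_cont]) simp
    have ct0: "continuous_on {\<alpha>..\<beta>} (tphi a b c e)" by (rule continuous_on_subset[OF tphi_cont[OF e0]]) simp
    have cf': "continuous_on {\<alpha>..\<beta>} f" by (rule continuous_on_subset[OF cf]) simp
    have ck': "continuous_on {\<alpha>..\<beta>} k" by (rule continuous_on_subset[OF ck]) simp
    have cP': "continuous_on {\<alpha>..\<beta>} P" by (rule continuous_on_subset[OF cP sub])
    have i1: "(\<lambda>x. f x * tphi2 a b c e x) integrable_on {\<alpha>..\<beta>}"
      by (rule integrable_continuous_interval) (intro continuous_intros ct2 cf')
    have i2: "(\<lambda>x. P x * tphi2 a b c e x) integrable_on {\<alpha>..\<beta>}"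
      by (rule integrable_continuous_interval) (intro continuous_intros ct2 cP')
    have i3: "(\<lambda>x. k x * tphi a b c e x) integrable_on {\<alpha>..\<beta>}"
      by (rule integrable_continuous_interval) (intro continuous_intros ct0 ck')
    have "integral {\<alpha>..\<beta>} (\<lambda>x. f x * tphi2 a b c e x) = integral {\<alpha>..\<beta>} (\<lambda>x. k x * tphi a b c e x)"
      using H[OF test] 1 2 by simp
    also have "\<dots> = integral {\<alpha>..\<beta>} (\<lambda>x. P x * tphi2 a b c e x)"
      using 3 integral_diff[OF i2 i3] by simp
    finally have "integral {\<alpha>..\<beta>} (\<lambda>x. f x * tphi2 a b c e x - P x * tphi2 a b c e x) = 0"
      using integral_diff[OF i1 i2] by simp
    then show "integral {a-e..c+e} (\<lambda>x. w x * tphi2 a b c e x) = 0"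
      unfolding w_def \<alpha>_def \<beta>_def by (simp add: algebra_simps)
  qed
  define m1 where "m1 = l + (r-l)/3"
  define m2 where "m2 = l + 2*(r-l)/3"
  have m12: "l < m1" "m1 < m2" "m2 < r" using lr by (auto simp: m1_def m2_def field_simps)
  define s where "s = (w m2 - w m1) / (m2 - m1)"
  have aff0: "w x * (m2 - m1) = w m1 * (m2 - x) + w m2 * (x - m1)" if x: "x \<in> {l<..<r}" for x
  proof -
    consider "x < m1" | "x = m1" | "m1 < x \<and> x < m2" | "x = m2" | "x > m2" by linarith
    then show ?thesis
    proof cases
      case 1 then show ?thesis using key[of x m1 m2] x m12 by (simp add: algebra_simps)
    next
      case 2 then show ?thesis by (simp add: algebra_simps)
    next
      case 3 then show ?thesis using key[of m1 x m2] x m12 by (simp add: algebra_simps)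
    next
      case 4 then show ?thesis by (simp add: algebra_simps)
    next
      case 5 then show ?thesis using key[of m1 m2 x] x m12 by (simp add: algebra_simps)
    qed
  qed
  have aff: "f x = P x + (w m1 + s * (x - m1))" if x: "x \<in> {l<..<r}" for x
  proof -
    have "w x = w m1 + s * (x - m1)"
      using aff0[OF x] m12 unfolding s_def by (simp add: field_simps)
    then show ?thesis unfolding w_def by simp
  qed
  have dP': "(P has_real_derivative K x) (at x)" if x: "x \<in> {l<..<r}" for x
  proof -
    have "at x within {l..r} = at x" by (rule at_within_interior) (use x in auto)
    then show ?thesis using dP[of x] x by auto
  qed
  have dK': "(K has_real_derivative k x) (at x)" if x: "x \<in> {l<..<r}" for x
  proof -
    have "at x within {l..r} = at x" by (rule at_within_interior) (use x in auto)
    then show ?thesis using dK[of x] x by auto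
  qed
  have df: "(f has_real_derivative K x + s) (at x)" if x: "x \<in> {l<..<r}" for x
  proof -
    have "((\<lambda>x. P x + (w m1 + s * (x - m1))) has_real_derivative K x + s) (at x)"
      using dP'[OF x] by (auto intro!: derivative_eq_intros)
    then show ?thesis
      by (rule has_field_derivative_transform_within_open[of _ _ _ "{l<..<r}"]) (use x aff in auto)
  qed
  have deq: "deriv f y = K y + s" if "y \<in> {l<..<r}" for y using df[OF that] by (rule DERIV_imp_deriv)
  show ?thesis
  proof
    fix x assume x: "x \<in> {l<..<r}"
    have "((\<lambda>x. K x + s) has_real_derivative k x) (at x)"
      using dK'[OF x] by (auto intro!: derivative_eq_intros)
    then have "(deriv f has_real_derivative k x) (at x)"
      by (rule has_field_derivative_transform_within_open[of _ _ _ "{l<..<r}"]) (use x deq in auto)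
    then show "(f has_real_derivative deriv f x) (at x) \<and> (deriv f has_real_derivative k x) (at x)"
      using df[OF x] deq[OF x] by simp
  qed
qed


lemma deriv_locally_zero:
  assumes "open S" "x \<in> S" "\<And>y. y \<in> S \<Longrightarrow> f y = 0"
  shows "(f has_real_derivative 0) (at x)"
proof -
  have "((\<lambda>x. 0) has_real_derivative 0) (at x)" by simp
  then show ?thesis by (rule has_field_derivative_transform_within_open[OF _ assms(1,2)]) (use assms(3) in auto)
qed

lemma smooth_deriv: "smooth_on U f \<Longrightarrow> smooth_on U (deriv f)"
proof -
  assume a: "smooth_on U f"
  have e: "(deriv ^^ k) (deriv f) = (deriv ^^ Suc k) f" for k by (simp only: funpow_Suc_right comp_def)
  show ?thesis using a unfolding smooth_on_def e by blast
qed

lemma smooth_has_deriv: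
  assumes "smooth_on U f" "x \<in> U"
  shows "(f has_real_derivative deriv f x) (at x)"
proof -
  have "(deriv ^^ 0) f differentiable (at x)" using assms unfolding smooth_on_def by blast
  then have "f differentiable (at x)" by simp
  then show ?thesis by (simp add: DERIV_deriv_iff_real_differentiable)
qed

lemma test_fun_deriv:
  assumes "test_fun U \<phi>"
  shows "test_fun U (deriv \<phi>)"
proof -
  let ?S = "{x. \<phi> x \<noteq> 0}"
  have sm: "smooth_on UNIV \<phi>" and cp: "compact (closure ?S)" and su: "closure ?S \<subseteq> U"
    using assms unfolding test_fun_def by auto
  have "{x. deriv \<phi> x \<noteq> 0} \<subseteq> closure ?S"
  proof
    fix x assume x: "x \<in> {x. deriv \<phi> x \<noteq> 0}"
    show "x \<in> closure ?S"
    proof (rule ccontr)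
      assume n: "x \<notin> closure ?S"
      have "(\<phi> has_real_derivative 0) (at x)"
      proof (rule deriv_locally_zero[of "- closure ?S"])
        show "\<phi> y = 0" if "y \<in> - closure ?S" for y using that closure_subset[of ?S] by blast
      qed (use n in auto)
      then have "deriv \<phi> x = 0" by (rule DERIV_imp_deriv)
      then show False using x by simp
    qed
  qed
  then have cs: "closure {x. deriv \<phi> x \<noteq> 0} \<subseteq> closure ?S"
    by (rule closure_minimal) (rule closed_closure)
  moreover have "compact (closure {x. deriv \<phi> x \<noteq> 0})"
  proof -
    have "bounded (closure ?S)" using cp by (rule compact_imp_bounded)
    moreover have "{x. deriv \<phi> x \<noteq> 0} \<subseteq> closure ?S"
      using closure_subset[of "{x. deriv \<phi> x \<noteq> 0}"] cs by (rule order_trans)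
    ultimately have "bounded {x. deriv \<phi> x \<noteq> 0}" by (rule bounded_subset)
    then show ?thesis by (simp add: compact_closure)
  qed
  moreover have "closure {x. deriv \<phi> x \<noteq> 0} \<subseteq> U" using cs su by (rule order_trans)
  ultimately show ?thesis unfolding test_fun_def using smooth_deriv[OF sm] by (intro conjI)
qed

lemma test_fun_mono: "test_fun U \<phi> \<Longrightarrow> U \<subseteq> V \<Longrightarrow> test_fun V \<phi>"
  unfolding test_fun_def by auto

lemma test_fun_cont: "test_fun U \<phi> \<Longrightarrow> continuous_on UNIV \<phi>"
proof -
  assume "test_fun U \<phi>"
  then have "smooth_on UNIV \<phi>" unfolding test_fun_def by simp
  then have "isCont \<phi> x" for x using smooth_has_deriv[of UNIV \<phi> x] DERIV_continuous by blast
  then show ?thesis by (simp add: continuous_at_imp_continuous_on)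
qed

lemma test_fun_out: "test_fun U \<phi> \<Longrightarrow> x \<notin> U \<Longrightarrow> \<phi> x = 0"
proof -
  assume a: "test_fun U \<phi>" "x \<notin> U"
  then have "x \<notin> closure {x. \<phi> x \<noteq> 0}" unfolding test_fun_def by blast
  then show ?thesis using closure_subset[of "{x. \<phi> x \<noteq> 0}"] by blast
qed

lemma weak2LL:
  fixes f h k :: "real \<Rightarrow> real"
  assumes H2: "H2_punct_with f h" and AE: "AE x in lborel. x \<noteq> 0 \<longrightarrow> h x = k x"
    and ck: "continuous_on UNIV k" and lr: "{l<..<r} \<subseteq> - {0}"
    and t: "test_fun {l<..<r} \<phi>"
  shows "(LINT x|lborel. f x * deriv (deriv \<phi>) x) = (LINT x|lborel. k x * \<phi> x)"
proof -
  have H2'1: "L2_on (- {0}) h" using H2 unfolding H2_punct_with_def by (elim conjE)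
  have H2'2: "\<exists>g. L2_on (- {0}) g \<and> weak_deriv (- {0}) f g \<and> weak_deriv (- {0}) g h"
    using H2 unfolding H2_punct_with_def by (elim conjE)
  note H2' = H2'1 H2'2
  obtain g where wf: "weak_deriv (- {0}) f g" and wg: "weak_deriv (- {0}) g h"
    using H2'(2) by blast
  have hm: "h \<in> borel_measurable lborel" using H2'(1) unfolding L2_on_def by (elim conjE)
  have t0: "test_fun (- {0}) \<phi>" by (rule test_fun_mono[OF t lr])
  have t1: "test_fun (- {0}) (deriv \<phi>)" by (rule test_fun_deriv[OF t0])
  have W1: "\<forall>\<psi>. test_fun (- {0}) \<psi> \<longrightarrow> (LINT x|lborel. f x * deriv \<psi> x) = - (LINT x|lborel. g x * \<psi> x)"
    using wf unfolding weak_deriv_def by (elim conjE)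
  have W2: "\<forall>\<psi>. test_fun (- {0}) \<psi> \<longrightarrow> (LINT x|lborel. g x * deriv \<psi> x) = - (LINT x|lborel. h x * \<psi> x)"
    using wg unfolding weak_deriv_def by (elim conjE)
  have "(LINT x|lborel. f x * deriv (deriv \<phi>) x) = - (LINT x|lborel. g x * deriv \<phi> x)"
    using W1[rule_format, OF t1] .
  also have "(LINT x|lborel. g x * deriv \<phi> x) = - (LINT x|lborel. h x * \<phi> x)"
    using W2[rule_format, OF t0] .
  also have "(LINT x|lborel. h x * \<phi> x) = (LINT x|lborel. k x * \<phi> x)"
  proof (rule integral_cong_AE)
    have cphi: "continuous_on UNIV \<phi>" by (rule test_fun_cont[OF t])
    have pm: "\<phi> \<in> borel_measurable lborel" using borel_measurable_continuous_onI[OF cphi] by simp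
    have km: "k \<in> borel_measurable lborel" using borel_measurable_continuous_onI[OF ck] by simp
    show "(\<lambda>x. h x * \<phi> x) \<in> borel_measurable lborel" using hm pm by (rule borel_measurable_times)
    show "(\<lambda>x. k x * \<phi> x) \<in> borel_measurable lborel" using km pm by (rule borel_measurable_times)
    have "\<phi> 0 = 0" by (rule test_fun_out[OF t0]) simp
    then show "AE x in lborel. h x * \<phi> x = k x * \<phi> x"
    proof (intro eventually_mono[OF AE])
      fix x assume "\<phi> 0 = 0" "x \<noteq> 0 \<longrightarrow> h x = k x"
      then show "h x * \<phi> x = k x * \<phi> x" by (cases "x = 0") auto
    qed
  qed
  finally show ?thesis by (simp only: minus_minus)
qed


inductive_set ideal :: "(real \<Rightarrow> real) set \<Rightarrow> (real \<Rightarrow> real) set \<Rightarrow> (real \<Rightarrow> real) set"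
  for R YG where
  ig: "y \<in> YG \<Longrightarrow> y \<in> ideal R YG"
| im: "r \<in> R \<Longrightarrow> i \<in> ideal R YG \<Longrightarrow> (\<lambda>x. r x * i x) \<in> ideal R YG"
| ia: "i \<in> ideal R YG \<Longrightarrow> j \<in> ideal R YG \<Longrightarrow> (\<lambda>x. i x + j x) \<in> ideal R YG"

lemma ideal_dclosed:
  assumes R: "dclosed U R"
    and Y: "\<And>y. y \<in> YG \<Longrightarrow> \<exists>i\<in>ideal R YG. \<forall>x\<in>U. (y has_real_derivative i x) (at x)"
  shows "dclosed U (ideal R YG)"
  unfolding dclosed_def
proof
  fix f assume "f \<in> ideal R YG"
  then show "\<exists>t'\<in>ideal R YG. \<forall>x\<in>U. (f has_real_derivative t' x) (at x)"
  proof induction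
    case (ig y) then show ?case using Y by blast
  next
    case (im r i)
    obtain r' where r': "r' \<in> R" "\<forall>x\<in>U. (r has_real_derivative r' x) (at x)"
      using R im.hyps(1) unfolding dclosed_def by blast
    obtain i' where i': "i' \<in> ideal R YG" "\<forall>x\<in>U. (i has_real_derivative i' x) (at x)"
      using im.IH by blast
    have "(\<lambda>x. (\<lambda>x. r' x * i x) x + (\<lambda>x. r x * i' x) x) \<in> ideal R YG"
      by (intro ideal.ia ideal.im r' i' im.hyps)
    then show ?case using r' i'
      by (intro bexI[of _ "\<lambda>x. r' x * i x + r x * i' x"]) (auto intro!: derivative_eq_intros)
  next
    case (ia i j)
    then obtain i' j' where "i' \<in> ideal R YG" "j' \<in> ideal R YG"
      "\<forall>x\<in>U. (i has_real_derivative i' x) (at x)" "\<forall>x\<in>U. (j has_real_derivative j' x) (at x)"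
      by blast
    then show ?case by (intro bexI[of _ "\<lambda>x. i' x + j' x"]) (auto intro!: derivative_eq_intros ideal.ia)
  qed
qed

lemma alg_bound:
  assumes "\<And>g. g \<in> G \<Longrightarrow> \<exists>B. \<forall>x\<in>S. \<bar>g x\<bar> \<le> B"
  shows "r \<in> alg G \<Longrightarrow> \<exists>B. \<forall>x\<in>S. \<bar>r x\<bar> \<le> B"
proof (induction rule: alg.induct)
  case (gen t) then show ?case using assms by blast
next
  case (const c) then show ?case by (intro exI[of _ "\<bar>c\<bar>"]) auto
next
  case (add f g)
  then obtain B1 B2 where "\<forall>x\<in>S. \<bar>f x\<bar> \<le> B1" "\<forall>x\<in>S. \<bar>g x\<bar> \<le> B2" by blast
  then show ?case by (intro exI[of _ "B1 + B2"]) (auto intro: abs_triangle_ineq[THEN order_trans] add_mono)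
next
  case (mult f g)
  then obtain B1 B2 where b: "\<forall>x\<in>S. \<bar>f x\<bar> \<le> B1" "\<forall>x\<in>S. \<bar>g x\<bar> \<le> B2" by blast
  show ?case
  proof (intro exI[of _ "B1 * B2"] ballI)
    fix x assume "x \<in> S"
    then have "\<bar>f x\<bar> \<le> B1" "\<bar>g x\<bar> \<le> B2" using b by auto
    then show "\<bar>f x * g x\<bar> \<le> B1 * B2" by (simp add: abs_mult mult_mono')
  qed
qed

lemma ideal_bound:
  assumes R: "\<And>r. r \<in> R \<Longrightarrow> \<exists>B. \<forall>x\<in>S. \<bar>r x\<bar> \<le> B"
    and Y: "\<And>y j. y \<in> YG \<Longrightarrow> \<exists>C. \<forall>x\<in>S. \<bar>x ^ j * y x\<bar> \<le> C"
  shows "i \<in> ideal R YG \<Longrightarrow> \<exists>C. \<forall>x\<in>S. \<bar>x ^ j * i x\<bar> \<le> C"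
proof (induction rule: ideal.induct)
  case (ig y) then show ?case using Y by blast
next
  case (im r i)
  obtain B where B: "\<forall>x\<in>S. \<bar>r x\<bar> \<le> B" using R im.hyps(1) by blast
  obtain C where C: "\<forall>x\<in>S. \<bar>x ^ j * i x\<bar> \<le> C" using im.IH by blast
  show ?case
  proof (intro exI[of _ "B * C"] ballI)
    fix x assume "x \<in> S"
    then have "\<bar>r x\<bar> \<le> B" "\<bar>x ^ j * i x\<bar> \<le> C" using B C by auto
    then have "\<bar>r x\<bar> * \<bar>x ^ j * i x\<bar> \<le> B * C" by (simp add: mult_mono')
    then show "\<bar>x ^ j * (r x * i x)\<bar> \<le> B * C" by (simp add: abs_mult algebra_simps)
  qed
next
  case (ia i1 i2)
  then obtain C1 C2 where "\<forall>x\<in>S. \<bar>x ^ j * i1 x\<bar> \<le> C1" "\<forall>x\<in>S. \<bar>x ^ j * i2 x\<bar> \<le> C2" by blast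
  then show ?case
    by (intro exI[of _ "C1 + C2"]) (auto simp: distrib_left intro: abs_triangle_ineq[THEN order_trans] add_mono)
qed

inductive_set tt :: "(real \<Rightarrow> real) \<Rightarrow> (real \<Rightarrow> real) set \<Rightarrow> (real \<Rightarrow> real) set"
  for \<phi> I where
  tb: "i \<in> I \<Longrightarrow> (\<lambda>x. (deriv ^^ n) \<phi> x * i x) \<in> tt \<phi> I"
| ts: "s \<in> tt \<phi> I \<Longrightarrow> t \<in> tt \<phi> I \<Longrightarrow> (\<lambda>x. s x + t x) \<in> tt \<phi> I"

lemma vanish_derivs:
  fixes \<phi> :: "real \<Rightarrow> real"
  assumes "\<forall>x\<in>{a0<..<b0}. \<phi> x = 0"
  shows "\<forall>x\<in>{a0<..<b0}. (deriv ^^ n) \<phi> x = 0"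
proof (induction n)
  case 0 then show ?case using assms by simp
next
  case (Suc n)
  show ?case
  proof
    fix x assume x: "x \<in> {a0<..<b0}"
    have "((deriv ^^ n) \<phi> has_real_derivative 0) (at x)"
      by (rule deriv_locally_zero[of "{a0<..<b0}"]) (use x Suc in auto)
    then show "(deriv ^^ Suc n) \<phi> x = 0" by (simp add: DERIV_imp_deriv)
  qed
qed

lemma smooth_iter_deriv:
  assumes "smooth_on UNIV \<phi>"
  shows "((deriv ^^ n) \<phi> has_real_derivative (deriv ^^ Suc n) \<phi> x) (at x)"
proof -
  have "(deriv ^^ n) \<phi> differentiable (at x)" using assms unfolding smooth_on_def by blast
  then show ?thesis by (simp add: DERIV_deriv_iff_real_differentiable)
qed

lemma tt_dclosed:
  assumes sm: "smooth_on UNIV \<phi>" and ab: "a0 < 0" "0 < b0" and van: "\<forall>x\<in>{a0<..<b0}. \<phi> x = 0"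
    and I: "dclosed (- {0}) I"
  shows "dclosed UNIV (tt \<phi> I)"
  unfolding dclosed_def
proof
  fix f assume "f \<in> tt \<phi> I"
  then show "\<exists>t'\<in>tt \<phi> I. \<forall>x\<in>UNIV. (f has_real_derivative t' x) (at x)"
  proof induction
    case (tb i n)
    obtain i' where i': "i' \<in> I" "\<forall>x\<in>- {0}. (i has_real_derivative i' x) (at x)"
      using I tb.hyps unfolding dclosed_def by blast
    let ?t' = "\<lambda>x. (deriv ^^ Suc n) \<phi> x * i x + (deriv ^^ n) \<phi> x * i' x"
    have mem: "?t' \<in> tt \<phi> I"
      using tt.ts[OF tt.tb[OF tb.hyps, of "Suc n"] tt.tb[OF i'(1), of n]] by simp
    have D: "((\<lambda>x. (deriv ^^ n) \<phi> x * i x) has_real_derivative ?t' x) (at x)" for x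
    proof (cases "x \<in> {a0<..<b0}")
      case True
      have v: "\<forall>x\<in>{a0<..<b0}. (deriv ^^ m) \<phi> x = 0" for m by (rule vanish_derivs[OF van])
      have "((\<lambda>x. (deriv ^^ n) \<phi> x * i x) has_real_derivative 0) (at x)"
        by (rule deriv_locally_zero[of "{a0<..<b0}"]) (use True v in auto)
      moreover have "?t' x = 0" using v[of n] v[of "Suc n"] True by simp
      ultimately show ?thesis by simp
    next
      case False
      then have "x \<noteq> 0" using ab by auto
      then have "(i has_real_derivative i' x) (at x)" using i' by auto
      from DERIV_mult[OF smooth_iter_deriv[OF sm] this] show ?thesis by (simp add: mult.commute)
    qed
    show ?case by (rule bexI[OF _ mem]) (use D in blast)
  next
    case (ts s t)
    then obtain s' t' where "s' \<in> tt \<phi> I" "t' \<in> tt \<phi> I"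
      "\<forall>x\<in>UNIV. (s has_real_derivative s' x) (at x)" "\<forall>x\<in>UNIV. (t has_real_derivative t' x) (at x)"
      by blast
    then show ?case by (intro bexI[of _ "\<lambda>x. s' x + t' x"]) (auto intro!: derivative_eq_intros tt.ts)
  qed
qed

lemma tt_bound:
  assumes bd: "\<And>k. \<exists>C. \<forall>x. \<bar>(deriv ^^ k) \<phi> x\<bar> \<le> C"
    and ab: "a0 < 0" "0 < b0" and van: "\<forall>x\<in>{a0<..<b0}. \<phi> x = 0"
    and I: "\<And>i j. i \<in> I \<Longrightarrow> \<exists>C. \<forall>x. \<bar>x\<bar> \<ge> min (-a0) b0 \<longrightarrow> \<bar>x ^ j * i x\<bar> \<le> C"
  shows "t \<in> tt \<phi> I \<Longrightarrow> \<exists>C. \<forall>x. \<bar>x ^ j * t x\<bar> \<le> C"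
proof (induction rule: tt.induct)
  case (tb i n)
  obtain B where B: "\<forall>x. \<bar>(deriv ^^ n) \<phi> x\<bar> \<le> B" using bd by blast
  obtain C where C: "\<forall>x. \<bar>x\<bar> \<ge> min (-a0) b0 \<longrightarrow> \<bar>x ^ j * i x\<bar> \<le> C" using I tb.hyps by blast
  have v: "\<forall>x\<in>{a0<..<b0}. (deriv ^^ n) \<phi> x = 0" by (rule vanish_derivs[OF van])
  show ?case
  proof (intro exI[of _ "B * C"] allI)
    fix x
    have B0: "B \<ge> 0" using B[rule_format, of 0] by linarith
    show "\<bar>x ^ j * ((deriv ^^ n) \<phi> x * i x)\<bar> \<le> B * C"
    proof (cases "\<bar>x\<bar> \<ge> min (-a0) b0")
      case True
      then have "\<bar>(deriv ^^ n) \<phi> x\<bar> * \<bar>x ^ j * i x\<bar> \<le> B * C"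
        using B C by (simp add: mult_mono')
      then show ?thesis by (simp add: abs_mult algebra_simps)
    next
      case False
      then have "x \<in> {a0<..<b0}" by auto
      then have "(deriv ^^ n) \<phi> x = 0" using v by auto
      moreover have "C \<ge> 0" using C[rule_format, of "min (-a0) b0"] ab by (auto intro: order_trans[OF abs_ge_zero])
      ultimately show ?thesis using B0 by simp
    qed
  qed
next
  case (ts s t)
  then obtain C1 C2 where "\<forall>x. \<bar>x ^ j * s x\<bar> \<le> C1" "\<forall>x. \<bar>x ^ j * t x\<bar> \<le> C2" by blast
  then show ?case
    by (intro exI[of _ "C1 + C2"]) (auto simp: distrib_left intro: abs_triangle_ineq[THEN order_trans] add_mono)
qed


lemma abs_deriv: "x \<noteq> (0::real) \<Longrightarrow> (abs has_real_derivative sgn x) (at x)"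
proof (cases "x > 0")
  case True
  have "((\<lambda>x. x) has_real_derivative 1) (at x)" by simp
  then have "(abs has_real_derivative 1) (at x)"
    by (rule has_field_derivative_transform_within_open[of _ _ _ "{0<..}"]) (use True in auto)
  then show ?thesis using True by simp
next
  case False
  assume "x \<noteq> 0"
  then have x: "x < 0" using False by simp
  have "((\<lambda>x. - x) has_real_derivative -1) (at x)" by (auto intro!: derivative_eq_intros)
  then have "(abs has_real_derivative -1) (at x)"
    by (rule has_field_derivative_transform_within_open[of _ _ _ "{..<0}"]) (use x in auto)
  then show ?thesis using x by simp
qed

lemma sgn_deriv: "x \<noteq> (0::real) \<Longrightarrow> (sgn has_real_derivative 0) (at x)"
proof (cases "x > 0")
  case True
  have "((\<lambda>x. 1) has_real_derivative 0) (at x)" by simp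
  then show ?thesis
    by (rule has_field_derivative_transform_within_open[of _ _ _ "{0<..}"]) (use True in auto)
next
  case False
  assume "x \<noteq> 0"
  then have x: "x < 0" using False by simp
  have "((\<lambda>x. -1) has_real_derivative 0) (at x)" by simp
  then show ?thesis
    by (rule has_field_derivative_transform_within_open[of _ _ _ "{..<0}"]) (use x in auto)
qed

lemma alg_cmul: "f \<in> alg T \<Longrightarrow> (\<lambda>x. c * f x) \<in> alg T"
  by (rule alg.mult[OF alg.const]) 

lemma alg_diff: "f \<in> alg T \<Longrightarrow> g \<in> alg T \<Longrightarrow> (\<lambda>x. f x - g x) \<in> alg T"
  using alg.add[OF _ alg_cmul[of g T "-1"], of f] by simp

locale setting =
  fixes p \<omega> \<gamma> e :: real and Y1 Y2 :: "real \<Rightarrow> real"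
  assumes p5: "p > 5" and om: "\<omega> > \<gamma>\<^sup>2 / 4" and e0: "e > 0"
    and D1: "D_even \<gamma> Y1" and D2: "D_even \<gamma> Y2"
    and Lp: "Lplus_eq p \<omega> \<gamma> Y1 (\<lambda>x. e * Y2 x)" and Lm: "Lminus_eq p \<omega> \<gamma> Y2 (\<lambda>x. - e * Y1 x)"
begin

lemma om0: "\<omega> > 0"
proof -
  have "\<gamma>\<^sup>2 / 4 \<ge> 0" by simp
  then show ?thesis using om by linarith
qed

definition "AA = (p + 1) * \<omega> / 2"
definition "bb = (p - 1) * sqrt \<omega> / 2"
definition "c0 = artanh (\<gamma> / (2 * sqrt \<omega>))"
definition "zz x = bb * \<bar>x\<bar> + c0"
definition "sc x = 1 / cosh (zz x)"
definition "th x = tanh (zz x)"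
definition "q x = AA * (sc x * sc x)"

lemma AA0: "AA > 0" unfolding AA_def using p5 om0 by simp
lemma bb0: "bb > 0" unfolding bb_def using p5 om0 by simp

lemma Qpow: "Q p \<omega> \<gamma> x powr (p - 1) = q x"
proof -
  define B where "B = (p + 1) * \<omega> / 2 * (1 / cosh ((p - 1) * sqrt \<omega> / 2 * \<bar>x\<bar> + artanh (\<gamma> / (2 * sqrt \<omega>))))\<^sup>2"
  have B0: "B > 0" unfolding B_def using p5 om0 by simp
  have "Q p \<omega> \<gamma> x powr (p - 1) = B powr (1 / (p - 1) * (p - 1))"
    unfolding Q_def B_def[symmetric] by (simp add: powr_powr)
  also have "\<dots> = B" using p5 B0 by simp
  also have "\<dots> = q x" unfolding B_def q_def AA_def sc_def zz_def bb_def c0_def by (simp add: power2_eq_square)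
  finally show ?thesis .
qed

lemma q_nonneg: "q x \<ge> 0" unfolding q_def using AA0 by simp

lemma sc_bound: "\<bar>sc x\<bar> \<le> 1" "sc x > 0"
  unfolding sc_def using cosh_real_ge_1[of "zz x"] by auto

lemma th_bound: "\<bar>th x\<bar> \<le> 1"
  unfolding th_def using tanh_real_bounds[of "zz x"] by auto

lemma sgn_bound: "\<bar>sgn x\<bar> \<le> (1::real)"
  by (simp add: abs_sgn_eq)

lemma cont_zz: "continuous_on UNIV zz" unfolding zz_def[abs_def] by (intro continuous_intros)

lemma cont_q: "continuous_on UNIV q"
  unfolding q_def[abs_def] sc_def[abs_def]
  by (intro continuous_intros continuous_on_compose2[OF continuous_on_cosh cont_zz]) auto

lemma zz_deriv: "x \<noteq> 0 \<Longrightarrow> (zz has_real_derivative bb * sgn x) (at x)"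
  unfolding zz_def[abs_def] using abs_deriv[of x]
  by (auto intro!: derivative_eq_intros)

lemma sc_deriv: "x \<noteq> 0 \<Longrightarrow> (sc has_real_derivative - bb * sgn x * sc x * th x) (at x)"
proof -
  assume x: "x \<noteq> 0"
  have "((\<lambda>x. 1 / cosh (zz x)) has_real_derivative - (sinh (zz x) * (bb * sgn x)) / (cosh (zz x))\<^sup>2) (at x)"
    using zz_deriv[OF x] by (auto intro!: derivative_eq_intros simp: power2_eq_square)
  moreover have "- (sinh (zz x) * (bb * sgn x)) / (cosh (zz x))\<^sup>2 = - bb * sgn x * sc x * th x"
    unfolding sc_def th_def tanh_def by (simp add: power2_eq_square field_simps)
  ultimately show ?thesis unfolding sc_def[abs_def] by simp
qed

lemma th_deriv: "x \<noteq> 0 \<Longrightarrow> (th has_real_derivative bb * sgn x * (1 - th x * th x)) (at x)"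
proof -
  assume x: "x \<noteq> 0"
  have "((\<lambda>x. tanh (zz x)) has_real_derivative (1 - tanh (zz x) ^ 2) * (bb * sgn x)) (at x)"
    using zz_deriv[OF x] by (auto intro!: derivative_eq_intros)
  then show ?thesis unfolding th_def[abs_def] by (simp add: power2_eq_square algebra_simps)
qed

definition "k1 x = \<omega> * Y1 x - p * q x * Y1 x - e * Y2 x"
definition "k2 x = \<omega> * Y2 x - q x * Y2 x + e * Y1 x"

lemma cY1: "continuous_on UNIV Y1" using D1 unfolding D_even_def by simp
lemma cY2: "continuous_on UNIV Y2" using D2 unfolding D_even_def by simp

lemma ck1: "continuous_on UNIV k1" unfolding k1_def[abs_def] by (intro continuous_intros cY1 cY2 cont_q)
lemma ck2: "continuous_on UNIV k2" unfolding k2_def[abs_def] by (intro continuous_intros cY1 cY2 cont_q)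

lemma interval_around:
  assumes "x \<noteq> (0::real)"
  obtains l r where "l < r" "x \<in> {l<..<r}" "{l<..<r} \<subseteq> - {0}"
proof (cases "x > 0")
  case True
  then show ?thesis using that[of "x/2" "2*x"] by auto
next
  case False
  then have "x < 0" using assms by simp
  then show ?thesis using that[of "2*x" "x/2"] by auto
qed

lemma Y1_C2: "x \<noteq> 0 \<Longrightarrow> (Y1 has_real_derivative deriv Y1 x) (at x) \<and> (deriv Y1 has_real_derivative k1 x) (at x)"
proof -
  assume x: "x \<noteq> 0"
  obtain h where H2: "H2_punct_with Y1 h" and AE0: "AE x in lborel. x \<noteq> 0 \<longrightarrow>
      - h x + \<omega> * Y1 x - p * (Q p \<omega> \<gamma> x) powr (p - 1) * Y1 x = e * Y2 x"
    using Lp unfolding Lplus_eq_def by blast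
  have AE: "AE x in lborel. x \<noteq> 0 \<longrightarrow> h x = k1 x"
    using AE0 by eventually_elim (auto simp: k1_def Qpow)
  obtain l r where lr: "l < r" "x \<in> {l<..<r}" "{l<..<r} \<subseteq> - {0}" using interval_around[OF x] by blast
  have "\<forall>x\<in>{l<..<r}. (Y1 has_real_derivative deriv Y1 x) (at x) \<and> (deriv Y1 has_real_derivative k1 x) (at x)"
    by (rule LL[OF lr(1) cY1 ck1 weak2LL[OF H2 AE ck1 lr(3)]])
  then show ?thesis using lr(2) by blast
qed

lemma Y2_C2: "x \<noteq> 0 \<Longrightarrow> (Y2 has_real_derivative deriv Y2 x) (at x) \<and> (deriv Y2 has_real_derivative k2 x) (at x)"
proof -
  assume x: "x \<noteq> 0"
  obtain h where H2: "H2_punct_with Y2 h" and AE0: "AE x in lborel. x \<noteq> 0 \<longrightarrow>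
      - h x + \<omega> * Y2 x - (Q p \<omega> \<gamma> x) powr (p - 1) * Y2 x = - e * Y1 x"
    using Lm unfolding Lminus_eq_def by blast
  have AE: "AE x in lborel. x \<noteq> 0 \<longrightarrow> h x = k2 x"
    using AE0 by eventually_elim (auto simp: k2_def Qpow)
  obtain l r where lr: "l < r" "x \<in> {l<..<r}" "{l<..<r} \<subseteq> - {0}" using interval_around[OF x] by blast
  have "\<forall>x\<in>{l<..<r}. (Y2 has_real_derivative deriv Y2 x) (at x) \<and> (deriv Y2 has_real_derivative k2 x) (at x)"
    by (rule LL[OF lr(1) cY2 ck2 weak2LL[OF H2 AE ck2 lr(3)]])
  then show ?thesis using lr(2) by blast
qed

definition "G0 = {Y1, Y2, deriv Y1, deriv Y2, sc, th, sgn}"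
definition "YG = {Y1, Y2, deriv Y1, deriv Y2}"

lemma G0_mem: "Y1 \<in> alg G0" "Y2 \<in> alg G0" "deriv Y1 \<in> alg G0" "deriv Y2 \<in> alg G0"
  "sc \<in> alg G0" "th \<in> alg G0" "sgn \<in> alg G0"
  unfolding G0_def by (auto intro: alg.gen)

lemma q_alg: "q \<in> alg G0"
  unfolding q_def[abs_def] by (intro alg.mult alg.const G0_mem)

lemma k1_alg: "k1 \<in> alg G0"
  unfolding k1_def[abs_def] by (intro alg_diff alg.mult alg.const G0_mem q_alg)

lemma k2_alg: "k2 \<in> alg G0"
  unfolding k2_def[abs_def] by (intro alg_diff alg.add alg.mult alg.const G0_mem q_alg)

lemma dclosed_G0: "dclosed (- {0}) (alg G0)"
proof (rule dclosed_alg)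
  fix t assume "t \<in> G0"
  then consider "t = Y1" | "t = Y2" | "t = deriv Y1" | "t = deriv Y2" | "t = sc" | "t = th" | "t = sgn"
    unfolding G0_def by blast
  then show "\<exists>t'\<in>alg G0. \<forall>x\<in>- {0}. (t has_real_derivative t' x) (at x)"
  proof cases
    case 1 then show ?thesis using Y1_C2 G0_mem by blast
  next
    case 2 then show ?thesis using Y2_C2 G0_mem by blast
  next
    case 3 then show ?thesis using Y1_C2 k1_alg by blast
  next
    case 4 then show ?thesis using Y2_C2 k2_alg by blast
  next
    case 5
    have m: "(\<lambda>x. - bb * sgn x * sc x * th x) \<in> alg G0" by (intro alg.mult alg.const G0_mem)
    show ?thesis unfolding 5 by (rule bexI[OF _ m]) (use sc_deriv in auto)
  next
    case 6
    have m: "(\<lambda>x. bb * sgn x * (1 - th x * th x)) \<in> alg G0" by (intro alg.mult alg_diff alg.const G0_mem)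
    show ?thesis unfolding 6 by (rule bexI[OF _ m]) (use th_deriv in auto)
  next
    case 7
    have m: "(\<lambda>x. 0) \<in> alg G0" by (rule alg.const)
    show ?thesis unfolding 7 by (rule bexI[OF _ m]) (use sgn_deriv in auto)
  qed
qed

lemma smooth_Y1: "smooth_on (- {0}) Y1"
  by (rule dclosed_smooth[OF _ dclosed_G0 G0_mem(1)]) auto
lemma smooth_Y2: "smooth_on (- {0}) Y2"
  by (rule dclosed_smooth[OF _ dclosed_G0 G0_mem(2)]) auto

definition "Idl = ideal (alg G0) YG"

lemma YG_mem: "Y1 \<in> Idl" "Y2 \<in> Idl" "deriv Y1 \<in> Idl" "deriv Y2 \<in> Idl"
  unfolding Idl_def YG_def by (auto intro: ideal.ig)

lemma dclosed_Id: "dclosed (- {0}) Idl"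
  unfolding Idl_def
proof (rule ideal_dclosed[OF dclosed_G0])
  fix y assume "y \<in> YG"
  then consider "y = Y1" | "y = Y2" | "y = deriv Y1" | "y = deriv Y2" unfolding YG_def by blast
  then show "\<exists>i\<in>ideal (alg G0) YG. \<forall>x\<in>- {0}. (y has_real_derivative i x) (at x)"
  proof cases
    case 1 then show ?thesis using Y1_C2 YG_mem unfolding Idl_def by blast
  next
    case 2 then show ?thesis using Y2_C2 YG_mem unfolding Idl_def by blast
  next
    case 3
    have m: "(\<lambda>x. (\<lambda>x. (\<lambda>x. \<omega> - p * q x) x * Y1 x) x + (\<lambda>x. (\<lambda>x. - e) x * Y2 x) x) \<in> ideal (alg G0) YG"
      by (intro ideal.ia ideal.im alg_diff alg.mult alg.const q_alg) (auto simp: YG_def intro: ideal.ig)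
    have "(\<lambda>x. (\<lambda>x. (\<lambda>x. \<omega> - p * q x) x * Y1 x) x + (\<lambda>x. (\<lambda>x. - e) x * Y2 x) x) = k1"
      by (auto simp: k1_def algebra_simps)
    then show ?thesis using m 3 Y1_C2 by auto
  next
    case 4
    have m: "(\<lambda>x. (\<lambda>x. (\<lambda>x. \<omega> - q x) x * Y2 x) x + (\<lambda>x. (\<lambda>x. e) x * Y1 x) x) \<in> ideal (alg G0) YG"
      by (intro ideal.ia ideal.im alg_diff alg.mult alg.const q_alg) (auto simp: YG_def intro: ideal.ig)
    have "(\<lambda>x. (\<lambda>x. (\<lambda>x. \<omega> - q x) x * Y2 x) x + (\<lambda>x. (\<lambda>x. e) x * Y1 x) x) = k2"
      by (auto simp: k2_def algebra_simps)
    then show ?thesis using m 4 Y2_C2 by auto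
  qed
qed

end


lemma aux3: "(t::real) \<le> w/4 \<Longrightarrow> 0 \<le> t \<Longrightarrow> 0 < w \<Longrightarrow> w \<le> 2*(w - t)"
proof -
  assume a: "t \<le> w/4" "0 \<le> t" "0 < w"
  then have "4 * t \<le> w" by (simp add: field_simps)
  then show ?thesis using a by (simp add: algebra_simps)
qed

lemma NI:
  fixes g :: "real \<Rightarrow> real"
  assumes ig: "integrable lborel g" and g0: "\<And>x. g x \<ge> 0" and d: "\<delta> > 0" and ge: "\<And>x. x \<ge> T \<Longrightarrow> g x \<ge> \<delta>"
  shows False
proof -
  have bnd: "\<delta> * real n \<le> (LINT x|lborel. g x)" for n :: nat
  proof -
    let ?f = "\<lambda>x. indicator {T..T + real n} x *\<^sub>R (\<lambda>_. \<delta>) x"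
    have int: "integrable lborel ?f"
      by (rule borel_integrable_compact) (auto intro: continuous_intros)
    have si: "set_integrable lborel {T..T + real n} (\<lambda>_. \<delta>)" using int by (simp add: set_integrable_def)
    have "(LINT x|lborel. ?f x) = (LINT x:{T..T + real n}|lborel. \<delta>)"
      by (simp add: set_lebesgue_integral_def)
    also have "\<dots> = integral {T..T + real n} (\<lambda>_. \<delta>)" by (rule set_borel_integral_eq_integral(2)[OF si])
    also have "\<dots> = \<delta> * real n" by simp
    finally have e: "(LINT x|lborel. ?f x) = \<delta> * real n" .
    have "(LINT x|lborel. ?f x) \<le> (LINT x|lborel. g x)"
    proof (rule integral_mono[OF int ig])
      fix x
      show "?f x \<le> g x"
        using ge[of x] g0[of x] by (auto simp: indicator_def)
    qed
    then show ?thesis using e by (simp add: mult.commute)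
  qed
  obtain n :: nat where "(LINT x|lborel. g x) / \<delta> < real n" using reals_Archimedean2 by blast
  then have "(LINT x|lborel. g x) < \<delta> * real n" using d by (simp add: field_simps)
  then show False using bnd[of n] by simp
qed

context setting
begin

lemma L2Y1: "integrable lborel (\<lambda>x. (Y1 x)\<^sup>2)"
proof -
  have "H1 Y1" using D1 unfolding D_even_def by simp
  then have "set_integrable lborel UNIV (\<lambda>x. (Y1 x)\<^sup>2)" unfolding H1_def L2_on_def by simp
  then show ?thesis by (simp add: set_integrable_def)
qed

lemma L2Y2: "integrable lborel (\<lambda>x. (Y2 x)\<^sup>2)"
proof -
  have "H1 Y2" using D2 unfolding D_even_def by simp
  then have "set_integrable lborel UNIV (\<lambda>x. (Y2 x)\<^sup>2)" unfolding H1_def L2_on_def by simp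
  then show ?thesis by (simp add: set_integrable_def)
qed

definition "u x = (Y1 x)\<^sup>2 + (Y2 x)\<^sup>2"
definition "u1 x = 2 * Y1 x * deriv Y1 x + 2 * Y2 x * deriv Y2 x"
definition "u2 x = 2 * (deriv Y1 x)\<^sup>2 + 2 * Y1 x * k1 x + 2 * (deriv Y2 x)\<^sup>2 + 2 * Y2 x * k2 x"

lemma u_int: "integrable lborel u"
  unfolding u_def[abs_def] using L2Y1 L2Y2 by simp

lemma u_nonneg: "u x \<ge> 0" unfolding u_def by simp

lemma u_deriv: "x \<noteq> 0 \<Longrightarrow> (u has_real_derivative u1 x) (at x)"
  unfolding u_def[abs_def] u1_def using Y1_C2 Y2_C2
  by (auto intro!: derivative_eq_intros simp: power2_eq_square)

lemma u1_deriv: "x \<noteq> 0 \<Longrightarrow> (u1 has_real_derivative u2 x) (at x)"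
  unfolding u1_def[abs_def] u2_def using Y1_C2 Y2_C2
  by (auto intro!: derivative_eq_intros simp: power2_eq_square algebra_simps)

lemma u2_ge: "u2 x \<ge> 2 * (\<omega> - p * q x) * u x"
proof -
  have "u2 x - 2 * (\<omega> - p * q x) * u x = 2 * (deriv Y1 x)\<^sup>2 + 2 * (deriv Y2 x)\<^sup>2 + 2 * (p - 1) * q x * (Y2 x)\<^sup>2"
    unfolding u2_def u_def k1_def k2_def by (simp add: algebra_simps power2_eq_square)
  moreover have "(p - 1) * q x * (Y2 x)\<^sup>2 \<ge> 0" using p5 q_nonneg by simp
  moreover have "(deriv Y1 x)\<^sup>2 \<ge> 0" "(deriv Y2 x)\<^sup>2 \<ge> 0" by simp_all
  ultimately show ?thesis by linarith
qed

lemma q_lim: "eventually (\<lambda>x. p * q x \<le> \<omega> / 4) at_top"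
proof -
  have "((\<lambda>x. AA * (1 / cosh (bb * x + c0)) * (1 / cosh (bb * x + c0))) \<longlongrightarrow> 0) at_top"
    using bb0 unfolding cosh_field_def by real_asymp
  then have "eventually (\<lambda>x. \<bar>AA * (1 / cosh (bb * x + c0)) * (1 / cosh (bb * x + c0))\<bar> < \<omega> / (4 * p)) at_top"
    using om0 p5 by (auto simp: tendsto_iff dist_real_def)
  moreover have "eventually (\<lambda>x. x > (0::real)) at_top" by simp
  ultimately show ?thesis
  proof eventually_elim
    case (elim x)
    then have "q x < \<omega> / (4 * p)" unfolding q_def sc_def zz_def using AA0 by simp
    then show ?case using p5 by (simp add: field_simps)
  qed
qed

lemma decay_u: "\<exists>R>0. \<exists>M\<ge>0. \<forall>x\<ge>R. u x \<le> M * exp (- sqrt \<omega> * (x - R))"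
proof -
  obtain R0 where R0: "\<And>x. x \<ge> R0 \<Longrightarrow> p * q x \<le> \<omega> / 4"
    using q_lim unfolding eventually_at_top_linorder by blast
  define R where "R = max R0 1"
  have R0': "R > 0" unfolding R_def by simp
  have xnz: "x \<noteq> 0" if "x \<ge> R" for x using that R0' by auto
  have u2R: "u2 x \<ge> \<omega> * u x" if "x \<ge> R" for x
  proof -
    have "p * q x \<le> \<omega> / 4" using R0[of x] that unfolding R_def by simp
    moreover have "p * q x \<ge> 0" using p5 q_nonneg[of x] by simp
    ultimately have "2 * (\<omega> - p * q x) \<ge> \<omega>" using om0 aux3 by blast
    then have "2 * (\<omega> - p * q x) * u x \<ge> \<omega> * u x" using u_nonneg by (simp add: mult_right_mono)
    then show ?thesis using u2_ge[of x] by linarith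
  qed
  have du: "(u has_real_derivative u1 x) (at x)" if "x \<ge> R" for x using u_deriv xnz that by blast
  have du1: "(u1 has_real_derivative u2 x) (at x)" if "x \<ge> R" for x using u1_deriv xnz that by blast
  have u2nn: "u2 x \<ge> 0" if "x \<ge> R" for x using u2R[OF that] om0 u_nonneg[of x] by (smt (verit) mult_nonneg_nonneg)
  have A: "u1 x \<le> 0" if x: "x \<ge> R" for x
  proof (rule ccontr)
    assume "\<not> u1 x \<le> 0"
    then have pos: "u1 x > 0" by simp
    have mono1: "u1 y \<ge> u1 x" if "y \<ge> x" for y
    proof (rule DERIV_nonneg_imp_nondecreasing[OF that])
      fix z assume z: "x \<le> z" "z \<le> y"
      show "\<exists>d. (u1 has_real_derivative d) (at z) \<and> d \<ge> 0"
        by (intro exI[of _ "u2 z"] conjI du1 u2nn) (use x z in auto)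
    qed
    have lin: "u y \<ge> u x + u1 x * (y - x)" if "y \<ge> x" for y
    proof -
      have "(\<lambda>y. u y - u1 x * y) x \<le> (\<lambda>y. u y - u1 x * y) y"
      proof (rule DERIV_nonneg_imp_nondecreasing[OF that])
        fix z assume z: "x \<le> z" "z \<le> y"
        have "((\<lambda>y. u y - u1 x * y) has_real_derivative u1 z - u1 x) (at z)"
          using du[of z] x z by (auto intro!: derivative_eq_intros)
        then show "\<exists>d. ((\<lambda>y. u y - u1 x * y) has_real_derivative d) (at z) \<and> d \<ge> 0"
          using mono1[of z] z by auto
      qed
      then show ?thesis by (simp add: algebra_simps)
    qed
    have "u y \<ge> 1" if "y \<ge> x + 1 / u1 x" for y
    proof -
      have "y \<ge> x" using that pos by (smt (verit) divide_pos_pos)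
      then have "u y \<ge> u x + u1 x * (y - x)" by (rule lin)
      moreover have "u1 x * (y - x) \<ge> u1 x * (1 / u1 x)" using that pos by (intro mult_left_mono) auto
      ultimately show ?thesis using pos u_nonneg[of x] by simp
    qed
    then show False using NI[OF u_int u_nonneg, of 1 "x + 1 / u1 x"] by auto
  qed
  have B: "u y \<le> u x" if "R \<le> x" "x \<le> y" for x y
  proof (rule DERIV_nonpos_imp_nonincreasing[OF that(2)])
    fix z assume z: "x \<le> z" "z \<le> y"
    show "\<exists>d. (u has_real_derivative d) (at z) \<and> d \<le> 0"
      by (intro exI[of _ "u1 z"] conjI du A) (use that z in auto)
  qed
  have C: "\<exists>T. \<forall>x\<ge>T. u x < \<eta>" if eta: "\<eta> > 0" for \<eta>
  proof -
    have "\<exists>x\<ge>R. u x < \<eta>"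
    proof (rule ccontr)
      assume "\<not> (\<exists>x\<ge>R. u x < \<eta>)"
      then have "\<And>x. x \<ge> R \<Longrightarrow> u x \<ge> \<eta>" by (simp add: not_less)
      then show False using NI[OF u_int u_nonneg eta] by blast
    qed
    then obtain x0 where "x0 \<ge> R" "u x0 < \<eta>" by blast
    then show ?thesis using B by (intro exI[of _ x0]) (smt (verit))
  qed
  define k where "k = sqrt \<omega>"
  have k0: "k > 0" "k * k = \<omega>" unfolding k_def using om0 by auto
  define M where "M = u R"
  have M0: "M \<ge> 0" unfolding M_def by (rule u_nonneg)
  define w where "w x = u x - M * exp (- k * (x - R))" for x
  define w1 where "w1 x = u1 x + M * k * exp (- k * (x - R))" for x
  define w2 where "w2 x = u2 x - M * (k * k) * exp (- k * (x - R))" for x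
  have dw: "(w has_real_derivative w1 x) (at x)" if "x \<ge> R" for x
    unfolding w_def[abs_def] w1_def using du[OF that] by (auto intro!: derivative_eq_intros simp: algebra_simps)
  have dw1: "(w1 has_real_derivative w2 x) (at x)" if "x \<ge> R" for x
    unfolding w1_def[abs_def] w2_def using du1[OF that] by (auto intro!: derivative_eq_intros simp: algebra_simps)
  have w2ge: "w2 x \<ge> \<omega> * w x" if "x \<ge> R" for x
    using u2R[OF that] unfolding w2_def w_def k0(2) by (simp add: algebra_simps)
  have wR: "w R = 0" unfolding w_def M_def by simp
  have wle: "w x \<le> u x" for x unfolding w_def using M0 by simp
  have D: "w x \<le> 0" if x: "x \<ge> R" for x
  proof (rule ccontr)
    assume "\<not> w x \<le> 0"
    then have wx: "w x > 0" by simp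
    then have xR: "x > R" using x wR by (cases "x = R") auto
    obtain T where T: "\<And>y. y \<ge> T \<Longrightarrow> u y < w x" using C[OF wx] by blast
    define T' where "T' = max T (x + 1)"
    have cw: "continuous_on {R..T'} w"
      using dw by (meson DERIV_continuous atLeastAtMost_iff continuous_at_imp_continuous_on)
    obtain x0 where x0: "x0 \<in> {R..T'}" "\<And>y. y \<in> {R..T'} \<Longrightarrow> w y \<le> w x0"
      using continuous_attains_sup[OF compact_Icc _ cw] xR unfolding T'_def by fastforce
    have "x \<in> {R..T'}" using xR unfolding T'_def by auto
    then have wx0: "w x0 \<ge> w x" using x0 by blast
    have "x0 \<noteq> R" using wx0 wx wR by auto
    moreover have "x0 \<noteq> T'"
    proof
      assume "x0 = T'"
      then have "u x0 < w x" using T unfolding T'_def by simp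
      then show False using wx0 wle[of x0] by simp
    qed
    ultimately have x0i: "R < x0" "x0 < T'" using x0(1) by auto
    have w1z: "w1 x0 = 0"
    proof (rule DERIV_local_max[OF dw[of x0]])
      show "x0 \<ge> R" using x0i by simp
      show "0 < min (x0 - R) (T' - x0)" using x0i by simp
      show "\<forall>y. \<bar>x0 - y\<bar> < min (x0 - R) (T' - x0) \<longrightarrow> w y \<le> w x0"
        using x0(2) by (auto simp: abs_if)
    qed
    have "w2 x0 > 0" using w2ge[of x0] x0i wx0 wx om0 by (smt (verit) mult_pos_pos)
    then obtain d where d: "d > 0" "\<And>h. h > 0 \<Longrightarrow> h < d \<Longrightarrow> w1 x0 < w1 (x0 + h)"
      using DERIV_pos_inc_right[OF dw1[of x0]] x0i by auto
    define h0 where "h0 = min d (T' - x0) / 2"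
    have mm: "min d (T' - x0) \<le> T' - x0" "min d (T' - x0) \<le> d" "min d (T' - x0) > 0" using d x0i by auto
    have h0a: "h0 > 0" using mm unfolding h0_def by simp
    have h0b: "h0 < d" using mm d unfolding h0_def by (simp add: field_simps)
    have h0c: "x0 + h0 \<le> T'" using mm unfolding h0_def by (simp add: field_simps)
    note h0 = h0a h0b h0c
    obtain z where z: "x0 < z" "z < x0 + h0" "w (x0 + h0) - w x0 = (x0 + h0 - x0) * w1 z"
      using MVT2[of x0 "x0 + h0" w w1] h0 dw x0i by force
    have "w1 z > 0" using d(2)[of "z - x0"] z h0 w1z by simp
    then have "h0 * w1 z > 0" using h0a by simp
    then have "w (x0 + h0) > w x0" using z(3) by simp
    moreover have "x0 + h0 \<in> {R..T'}" using h0 x0i by auto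
    ultimately show False using x0(2) by fastforce
  qed
  have "\<forall>x\<ge>R. u x \<le> M * exp (- sqrt \<omega> * (x - R))"
  proof (intro allI impI)
    fix x assume "x \<ge> R"
    then show "u x \<le> M * exp (- sqrt \<omega> * (x - R))" using D[of x] unfolding w_def k_def by simp
  qed
  then show ?thesis using R0' M0 by blast
qed

end


lemma deriv_decay1:
  fixes f f1 f2 :: "real \<Rightarrow> real"
  assumes \<beta>: "\<beta> > 0"
    and d1: "\<And>x. x \<ge> R \<Longrightarrow> (f has_real_derivative f1 x) (at x)"
    and d2: "\<And>x. x \<ge> R \<Longrightarrow> (f1 has_real_derivative f2 x) (at x)"
    and b2: "\<And>x. x \<ge> R \<Longrightarrow> \<bar>f2 x\<bar> \<le> C * exp (- \<beta> * x)"
    and bf: "\<And>x. x \<ge> R \<Longrightarrow> \<bar>f x\<bar> \<le> B"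
    and x0: "x0 \<ge> R"
  shows "f1 x0 \<le> C / \<beta> * exp (- \<beta> * x0)"
proof (rule ccontr)
  assume "\<not> f1 x0 \<le> C / \<beta> * exp (- \<beta> * x0)"
  then have gt: "f1 x0 > C / \<beta> * exp (- \<beta> * x0)" by simp
  have C0: "C \<ge> 0" using b2[OF x0] by (smt (verit) exp_gt_zero zero_le_mult_iff)
  have B0: "B \<ge> 0" using bf[OF x0] by simp
  define E where "E y = C / \<beta> * exp (- \<beta> * y)" for y
  have E0: "E y \<ge> 0" for y unfolding E_def using C0 \<beta> by simp
  define \<delta> where "\<delta> = f1 x0 - E x0"
  have \<delta>0: "\<delta> > 0" unfolding \<delta>_def E_def using gt by simp
  have G: "f1 y - E y \<ge> \<delta>" if "y \<ge> x0" for y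
  proof -
    have "(\<lambda>y. f1 y - E y) x0 \<le> (\<lambda>y. f1 y - E y) y"
    proof (rule DERIV_nonneg_imp_nondecreasing[OF that])
      fix z assume z: "x0 \<le> z" "z \<le> y"
      have "((\<lambda>y. f1 y - E y) has_real_derivative f2 z + C * exp (- \<beta> * z)) (at z)"
        unfolding E_def using d2[of z] z x0 \<beta> by (auto intro!: derivative_eq_intros simp: field_simps)
      moreover have "f2 z + C * exp (- \<beta> * z) \<ge> 0" using b2[of z] z x0 by (smt (verit))
      ultimately show "\<exists>d. ((\<lambda>y. f1 y - E y) has_real_derivative d) (at z) \<and> d \<ge> 0" by blast
    qed
    then show ?thesis unfolding \<delta>_def by simp
  qed
  have F: "f y \<ge> f x0 + \<delta> * (y - x0)" if "y \<ge> x0" for y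
  proof -
    have "(\<lambda>y. f y - \<delta> * y) x0 \<le> (\<lambda>y. f y - \<delta> * y) y"
    proof (rule DERIV_nonneg_imp_nondecreasing[OF that])
      fix z assume z: "x0 \<le> z" "z \<le> y"
      have "((\<lambda>y. f y - \<delta> * y) has_real_derivative f1 z - \<delta>) (at z)"
        using d1[of z] z x0 by (auto intro!: derivative_eq_intros)
      moreover have "f1 z - \<delta> \<ge> 0" using G[of z] E0[of z] z by simp
      ultimately show "\<exists>d. ((\<lambda>y. f y - \<delta> * y) has_real_derivative d) (at z) \<and> d \<ge> 0" by blast
    qed
    then show ?thesis by (simp add: algebra_simps)
  qed
  define y where "y = x0 + (2 * B + 1) / \<delta>"
  have y: "y \<ge> x0" unfolding y_def using B0 \<delta>0 by simp
  have "f y \<ge> f x0 + \<delta> * ((2 * B + 1) / \<delta>)" using F[OF y] unfolding y_def by simp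
  also have "\<delta> * ((2 * B + 1) / \<delta>) = 2 * B + 1" using \<delta>0 by simp
  finally have "f y \<ge> f x0 + 2 * B + 1" by simp
  moreover have "\<bar>f x0\<bar> \<le> B" "\<bar>f y\<bar> \<le> B" using bf x0 y by auto
  ultimately show False by linarith
qed

lemma deriv_decay:
  fixes f f1 f2 :: "real \<Rightarrow> real"
  assumes \<beta>: "\<beta> > 0"
    and d1: "\<And>x. x \<ge> R \<Longrightarrow> (f has_real_derivative f1 x) (at x)"
    and d2: "\<And>x. x \<ge> R \<Longrightarrow> (f1 has_real_derivative f2 x) (at x)"
    and b2: "\<And>x. x \<ge> R \<Longrightarrow> \<bar>f2 x\<bar> \<le> C * exp (- \<beta> * x)"
    and bf: "\<And>x. x \<ge> R \<Longrightarrow> \<bar>f x\<bar> \<le> B"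
    and x0: "x0 \<ge> R"
  shows "\<bar>f1 x0\<bar> \<le> C / \<beta> * exp (- \<beta> * x0)"
proof -
  have "f1 x0 \<le> C / \<beta> * exp (- \<beta> * x0)" by (rule deriv_decay1[OF \<beta> d1 d2 b2 bf x0])
  moreover have "(\<lambda>x. - f1 x) x0 \<le> C / \<beta> * exp (- \<beta> * x0)"
  proof (rule deriv_decay1[of \<beta> R "\<lambda>x. - f x" "\<lambda>x. - f1 x" "\<lambda>x. - f2 x" C B x0])
    show "((\<lambda>x. - f x) has_real_derivative - f1 x) (at x)" if "x \<ge> R" for x
      using DERIV_minus[OF d1[OF that]] .
    show "((\<lambda>x. - f1 x) has_real_derivative - f2 x) (at x)" if "x \<ge> R" for x
      using DERIV_minus[OF d2[OF that]] .
    show "\<bar>- f2 x\<bar> \<le> C * exp (- \<beta> * x)" if "x \<ge> R" for x using b2[OF that] by simp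
    show "\<bar>- f x\<bar> \<le> B" if "x \<ge> R" for x using bf[OF that] by simp
  qed (use \<beta> x0 in auto)
  ultimately show ?thesis by simp
qed

lemma poly_decay:
  fixes g :: "real \<Rightarrow> real"
  assumes \<beta>: "\<beta> > 0" and \<delta>: "\<delta> > 0" and bg: "\<And>x. x \<ge> R \<Longrightarrow> \<bar>g x\<bar> \<le> K * exp (- \<beta> * x)"
    and cg: "continuous_on {\<delta>..} g"
  shows "\<exists>C. \<forall>x\<ge>\<delta>. \<bar>x ^ j * g x\<bar> \<le> C"
proof -
  have lim: "((\<lambda>x::real. x ^ j * exp (- \<beta> * x)) \<longlongrightarrow> 0) at_top" using \<beta> by real_asymp
  then have "eventually (\<lambda>x. \<bar>x ^ j * exp (- \<beta> * x)\<bar> < 1) at_top"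
    by (auto simp: tendsto_iff dist_real_def)
  then obtain T where T: "\<And>x. x \<ge> T \<Longrightarrow> \<bar>x ^ j * exp (- \<beta> * x)\<bar> < 1"
    unfolding eventually_at_top_linorder by blast
  define T' where "T' = max (max T R) \<delta>"
  have "continuous_on {\<delta>..T'} (\<lambda>x. x ^ j * g x)"
    by (intro continuous_intros continuous_on_subset[OF cg]) auto
  then have "compact ((\<lambda>x. x ^ j * g x) ` {\<delta>..T'})" by (intro compact_continuous_image) auto
  then have "bounded ((\<lambda>x. x ^ j * g x) ` {\<delta>..T'})" by (rule compact_imp_bounded)
  then obtain B where B0: "\<forall>y\<in>(\<lambda>x. x ^ j * g x) ` {\<delta>..T'}. \<bar>y\<bar> \<le> B"
    unfolding bounded_real by blast
  have B: "\<bar>x ^ j * g x\<bar> \<le> B" if "x \<in> {\<delta>..T'}" for x using B0 that by blast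
  show ?thesis
  proof (intro exI[of _ "max B \<bar>K\<bar>"] allI impI)
    fix x assume x: "x \<ge> \<delta>"
    show "\<bar>x ^ j * g x\<bar> \<le> max B \<bar>K\<bar>"
    proof (cases "x \<le> T'")
      case True then show ?thesis using B[of x] x by auto
    next
      case False
      then have xT: "x \<ge> T" "x \<ge> R" "x > 0" unfolding T'_def using \<delta> by auto
      have "\<bar>x ^ j * g x\<bar> = x ^ j * \<bar>g x\<bar>" using xT by (simp add: abs_mult)
      also have "\<dots> \<le> x ^ j * (K * exp (- \<beta> * x))" using bg[OF xT(2)] xT by (intro mult_left_mono) auto
      also have "\<dots> = K * (x ^ j * exp (- \<beta> * x))" by simp
      also have "\<dots> \<le> \<bar>K\<bar> * 1"
      proof -
        have "\<bar>x ^ j * exp (- \<beta> * x)\<bar> < 1" by (rule T[OF xT(1)])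
        have "K * (x ^ j * exp (- \<beta> * x)) \<le> \<bar>K * (x ^ j * exp (- \<beta> * x))\<bar>" by (rule abs_ge_self)
        also have "\<dots> = \<bar>K\<bar> * \<bar>x ^ j * exp (- \<beta> * x)\<bar>" by (rule abs_mult)
        finally have "K * (x ^ j * exp (- \<beta> * x)) \<le> \<bar>K\<bar> * \<bar>x ^ j * exp (- \<beta> * x)\<bar>" .
        then
        also have "\<dots> \<le> \<bar>K\<bar> * 1" using \<open>\<bar>x ^ j * exp (- \<beta> * x)\<bar> < 1\<close> by (intro mult_left_mono) auto
        finally show ?thesis .
      qed
      finally show ?thesis by simp
    qed
  qed
qed


lemma sq_exp_aux:
  assumes "M \<ge> (0::real)"
  shows "(sqrt M * exp (b * R) * exp (- b * x))\<^sup>2 = M * exp (- (2 * b) * (x - R))"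
proof -
  have e1: "exp (b * R) * exp (- b * x) = exp (b * R - b * x)" by (simp add: exp_diff exp_minus field_simps)
  have e2: "(exp (b * R - b * x))\<^sup>2 = exp (- (2 * b) * (x - R))"
  proof -
    have "(exp (b * R - b * x))\<^sup>2 = exp (b * R - b * x) * exp (b * R - b * x)" by (simp add: power2_eq_square)
    also have "\<dots> = exp ((b * R - b * x) + (b * R - b * x))" by (rule exp_add[symmetric])
    also have "(b * R - b * x) + (b * R - b * x) = - (2 * b) * (x - R)" by (simp add: algebra_simps)
    finally show ?thesis .
  qed
  have "(sqrt M * exp (b * R) * exp (- b * x))\<^sup>2 = (sqrt M)\<^sup>2 * (exp (b * R) * exp (- b * x))\<^sup>2"
    by (simp add: power_mult_distrib)
  also have "\<dots> = M * (exp (b * R - b * x))\<^sup>2" by (simp only: e1 real_sqrt_pow2[OF assms])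
  also have "\<dots> = M * exp (- (2 * b) * (x - R))" by (simp only: e2)
  finally show ?thesis .
qed

context setting
begin

lemma q_le: "q x \<le> AA"
proof -
  have "sc x * sc x \<le> 1" using sc_bound[of x] by (simp add: abs_le_iff mult_le_one)
  then show ?thesis unfolding q_def using AA0 by (simp add: mult_left_le)
qed

lemma exp_bounds: "\<exists>R>0. \<exists>\<beta>>0. \<exists>K. \<forall>x\<ge>R. \<bar>Y1 x\<bar> \<le> K * exp (- \<beta> * x) \<and> \<bar>Y2 x\<bar> \<le> K * exp (- \<beta> * x)
   \<and> \<bar>deriv Y1 x\<bar> \<le> K * exp (- \<beta> * x) \<and> \<bar>deriv Y2 x\<bar> \<le> K * exp (- \<beta> * x)"
proof -
  obtain R M where R: "R > 0" and M: "M \<ge> 0" and uM: "\<And>x. x \<ge> R \<Longrightarrow> u x \<le> M * exp (- sqrt \<omega> * (x - R))"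
    using decay_u by blast
  define \<beta> where "\<beta> = sqrt \<omega> / 2"
  have \<beta>0: "\<beta> > 0" unfolding \<beta>_def using om0 by simp
  define K0 where "K0 = sqrt M * exp (\<beta> * R)"
  have K00: "K0 \<ge> 0" unfolding K0_def using M by simp
  have Ybd: "\<bar>Y1 x\<bar> \<le> K0 * exp (- \<beta> * x) \<and> \<bar>Y2 x\<bar> \<le> K0 * exp (- \<beta> * x)" if x: "x \<ge> R" for x
  proof -
    have sq: "(K0 * exp (- \<beta> * x))\<^sup>2 = M * exp (- sqrt \<omega> * (x - R))"
      unfolding K0_def using sq_exp_aux[OF M, of \<beta> R x] by (simp add: \<beta>_def)
    have "(Y1 x)\<^sup>2 \<le> u x" "(Y2 x)\<^sup>2 \<le> u x" unfolding u_def by simp_all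
    then have "\<bar>Y1 x\<bar>\<^sup>2 \<le> (K0 * exp (- \<beta> * x))\<^sup>2" "\<bar>Y2 x\<bar>\<^sup>2 \<le> (K0 * exp (- \<beta> * x))\<^sup>2"
      using uM[OF x] unfolding sq by simp_all
    moreover have "K0 * exp (- \<beta> * x) \<ge> 0" using K00 by simp
    ultimately have "\<bar>Y1 x\<bar> \<le> K0 * exp (- \<beta> * x)" "\<bar>Y2 x\<bar> \<le> K0 * exp (- \<beta> * x)"
      by (blast intro: power2_le_imp_le)+
    then show ?thesis by simp
  qed
  have Kbd: "\<bar>Y1 x\<bar> \<le> K0" if x: "x \<ge> R" for x
  proof -
    have "exp (- \<beta> * x) \<le> 1" using \<beta>0 x R by simp
    then have "K0 * exp (- \<beta> * x) \<le> K0" using K00 by (simp add: mult_left_le)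
    then show ?thesis using Ybd[OF x] by simp
  qed
  have Kbd2: "\<bar>Y2 x\<bar> \<le> K0" if x: "x \<ge> R" for x
  proof -
    have "exp (- \<beta> * x) \<le> 1" using \<beta>0 x R by simp
    then have "K0 * exp (- \<beta> * x) \<le> K0" using K00 by (simp add: mult_left_le)
    then show ?thesis using Ybd[OF x] by simp
  qed
  define C where "C = (\<omega> + p * AA + e) * K0"
  have kb: "\<bar>k1 x\<bar> \<le> C * exp (- \<beta> * x) \<and> \<bar>k2 x\<bar> \<le> C * exp (- \<beta> * x)" if x: "x \<ge> R" for x
  proof -
    define E where "E = K0 * exp (- \<beta> * x)"
    have y1: "\<bar>Y1 x\<bar> \<le> E" and y2: "\<bar>Y2 x\<bar> \<le> E" using Ybd[OF x] unfolding E_def by auto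
    have qq: "0 \<le> q x" "q x \<le> AA" using q_nonneg q_le by auto
    have E0: "E \<ge> 0" unfolding E_def using K00 by simp
    have a1: "\<bar>\<omega> * Y1 x\<bar> \<le> \<omega> * E" using y1 om0 by (simp add: abs_mult mult_left_mono)
    have a2: "\<bar>p * q x * Y1 x\<bar> \<le> p * AA * E"
    proof -
      have "\<bar>p * q x * Y1 x\<bar> = p * q x * \<bar>Y1 x\<bar>" using p5 qq by (simp add: abs_mult)
      also have "\<dots> \<le> p * AA * E" using p5 qq y1 by (intro mult_mono mult_left_mono) auto
      finally show ?thesis .
    qed
    have a2': "\<bar>q x * Y2 x\<bar> \<le> p * AA * E"
    proof -
      have "\<bar>q x * Y2 x\<bar> = q x * \<bar>Y2 x\<bar>" using qq by (simp add: abs_mult)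
      also have "\<dots> \<le> AA * E" using qq y2 by (intro mult_mono) auto
      also have "\<dots> \<le> p * AA * E" using p5 AA0 E0 by (simp add: mult_right_mono)
      finally show ?thesis .
    qed
    have a3: "\<bar>e * Y2 x\<bar> \<le> e * E" using y2 e0 by (simp add: abs_mult mult_left_mono)
    have a3': "\<bar>e * Y1 x\<bar> \<le> e * E" using y1 e0 by (simp add: abs_mult mult_left_mono)
    have a1': "\<bar>\<omega> * Y2 x\<bar> \<le> \<omega> * E" using y2 om0 by (simp add: abs_mult mult_left_mono)
    have "\<bar>k1 x\<bar> \<le> \<omega> * E + p * AA * E + e * E" unfolding k1_def using a1 a2 a3 by linarith
    moreover have "\<bar>k2 x\<bar> \<le> \<omega> * E + p * AA * E + e * E" unfolding k2_def using a1' a2' a3' by linarith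
    moreover have "\<omega> * E + p * AA * E + e * E = C * exp (- \<beta> * x)" unfolding C_def E_def by (simp add: algebra_simps)
    ultimately show ?thesis by simp
  qed
  have xnz: "x \<noteq> 0" if "x \<ge> R" for x using that R by auto
  have dY1: "\<bar>deriv Y1 x\<bar> \<le> C / \<beta> * exp (- \<beta> * x)" if x: "x \<ge> R" for x
    by (rule deriv_decay[OF \<beta>0 _ _ _ Kbd x]) (use Y1_C2 xnz kb in auto)
  have dY2: "\<bar>deriv Y2 x\<bar> \<le> C / \<beta> * exp (- \<beta> * x)" if x: "x \<ge> R" for x
    by (rule deriv_decay[OF \<beta>0 _ _ _ Kbd2 x]) (use Y2_C2 xnz kb in auto)
  define K where "K = max K0 (C / \<beta>)"
  have le: "a * exp (- \<beta> * x) \<le> K * exp (- \<beta> * x)" if "a \<le> K" for a x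
    using that by (simp add: mult_right_mono)
  have "\<forall>x\<ge>R. \<bar>Y1 x\<bar> \<le> K * exp (- \<beta> * x) \<and> \<bar>Y2 x\<bar> \<le> K * exp (- \<beta> * x)
   \<and> \<bar>deriv Y1 x\<bar> \<le> K * exp (- \<beta> * x) \<and> \<bar>deriv Y2 x\<bar> \<le> K * exp (- \<beta> * x)"
  proof (intro allI impI conjI)
    fix x assume x: "x \<ge> R"
    show "\<bar>Y1 x\<bar> \<le> K * exp (- \<beta> * x)" using Ybd[OF x] le[of K0 x] unfolding K_def by linarith
    show "\<bar>Y2 x\<bar> \<le> K * exp (- \<beta> * x)" using Ybd[OF x] le[of K0 x] unfolding K_def by linarith
    show "\<bar>deriv Y1 x\<bar> \<le> K * exp (- \<beta> * x)" using dY1[OF x] le[of "C/\<beta>" x] unfolding K_def by linarith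
    show "\<bar>deriv Y2 x\<bar> \<le> K * exp (- \<beta> * x)" using dY2[OF x] le[of "C/\<beta>" x] unfolding K_def by linarith
  qed
  then show ?thesis using R \<beta>0 by blast
qed

end


context setting
begin

lemma even1: "Y1 (- x) = Y1 x" using D1 unfolding D_even_def by simp
lemma even2: "Y2 (- x) = Y2 x" using D2 unfolding D_even_def by simp

lemma odd_deriv:
  assumes Y: "\<And>x. Y (- x) = Y x" and d: "\<And>x. x \<noteq> 0 \<Longrightarrow> (Y has_real_derivative deriv Y x) (at x)"
    and x: "x \<noteq> 0"
  shows "deriv Y (- x) = - deriv Y x"
proof -
  have d1: "((\<lambda>x. - x) has_real_derivative -1) (at x)" by (auto intro!: derivative_eq_intros)
  have "((\<lambda>x. Y (- x)) has_real_derivative deriv Y (- x) * -1) (at x)"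
    using DERIV_chain2[OF d[of "- x"] d1] x by simp
  moreover have "(\<lambda>x. Y (- x)) = Y" using Y by auto
  ultimately have "(Y has_real_derivative - deriv Y (- x)) (at x)" by simp
  from DERIV_unique[OF this d[OF x]] show ?thesis by simp
qed

lemma YG_sym: "g \<in> YG \<Longrightarrow> x \<noteq> 0 \<Longrightarrow> \<bar>g (- x)\<bar> = \<bar>g x\<bar>"
proof -
  assume g: "g \<in> YG" and x: "x \<noteq> 0"
  have o1: "deriv Y1 (- x) = - deriv Y1 x"
    by (rule odd_deriv[of Y1 x]) (use even1 Y1_C2 x in auto)
  have o2: "deriv Y2 (- x) = - deriv Y2 x"
    by (rule odd_deriv[of Y2 x]) (use even2 Y2_C2 x in auto)
  show ?thesis using g o1 o2 even1 even2 unfolding YG_def by auto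
qed

lemma YG_cont: "g \<in> YG \<Longrightarrow> continuous_on {\<delta>..} g" if "\<delta> > 0"
proof -
  assume g: "g \<in> YG"
  have "isCont g x" if "x \<in> {\<delta>..}" for x
  proof -
    have x: "x \<noteq> 0" using that \<open>\<delta> > 0\<close> by auto
    show ?thesis using g Y1_C2[OF x] Y2_C2[OF x] unfolding YG_def by (auto intro: DERIV_isCont)
  qed
  then show ?thesis by (simp add: continuous_at_imp_continuous_on)
qed

lemma YG_poly:
  assumes g: "g \<in> YG" and \<delta>: "\<delta> > 0"
  shows "\<exists>C. \<forall>x. \<bar>x\<bar> \<ge> \<delta> \<longrightarrow> \<bar>x ^ j * g x\<bar> \<le> C"
proof -
  obtain R \<beta> K where \<beta>: "\<beta> > 0" and bd: "\<forall>x\<ge>R. \<bar>Y1 x\<bar> \<le> K * exp (- \<beta> * x) \<and> \<bar>Y2 x\<bar> \<le> K * exp (- \<beta> * x)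
   \<and> \<bar>deriv Y1 x\<bar> \<le> K * exp (- \<beta> * x) \<and> \<bar>deriv Y2 x\<bar> \<le> K * exp (- \<beta> * x)"
    using exp_bounds by blast
  have bg: "\<And>x. x \<ge> R \<Longrightarrow> \<bar>g x\<bar> \<le> K * exp (- \<beta> * x)" using g bd unfolding YG_def by auto
  obtain C where C: "\<forall>x\<ge>\<delta>. \<bar>x ^ j * g x\<bar> \<le> C"
    using poly_decay[OF \<beta> \<delta> bg YG_cont[OF \<delta> g]] by blast
  show ?thesis
  proof (intro exI[of _ C] allI impI)
    fix x assume x: "\<bar>x\<bar> \<ge> \<delta>"
    show "\<bar>x ^ j * g x\<bar> \<le> C"
    proof (cases "x \<ge> 0")
      case True then show ?thesis using C x by auto
    next
      case False
      then have mx: "- x \<ge> \<delta>" using x by auto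
      have "\<bar>x ^ j * g x\<bar> = \<bar>(- x) ^ j * g (- x)\<bar>"
        using YG_sym[OF g, of x] False by (simp add: abs_mult power_abs)
      also have "\<dots> \<le> C" using C mx by auto
      finally show ?thesis .
    qed
  qed
qed

lemma alg_G0_bound: "\<delta> > 0 \<Longrightarrow> r \<in> alg G0 \<Longrightarrow> \<exists>B. \<forall>x\<in>{x. \<bar>x\<bar> \<ge> \<delta>}. \<bar>r x\<bar> \<le> B"
proof (rule alg_bound)
  fix g assume \<delta>: "\<delta> > 0" and "g \<in> G0"
  then consider "g \<in> YG" | "g = sc" | "g = th" | "g = sgn" unfolding G0_def YG_def by blast
  then show "\<exists>B. \<forall>x\<in>{x. \<bar>x\<bar> \<ge> \<delta>}. \<bar>g x\<bar> \<le> B"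
  proof cases
    case 1 then show ?thesis using YG_poly[OF 1 \<delta>, of 0] by auto
  next
    case 2 then show ?thesis using sc_bound by blast
  next
    case 3 then show ?thesis using th_bound by blast
  next
    case 4 then show ?thesis using sgn_bound by blast
  qed
qed

lemma Idl_bound: "\<delta> > 0 \<Longrightarrow> i \<in> Idl \<Longrightarrow> \<exists>C. \<forall>x. \<bar>x\<bar> \<ge> \<delta> \<longrightarrow> \<bar>x ^ j * i x\<bar> \<le> C"
proof -
  assume \<delta>: "\<delta> > 0" and i: "i \<in> Idl"
  have "\<exists>C. \<forall>x\<in>{x. \<bar>x\<bar> \<ge> \<delta>}. \<bar>x ^ j * i x\<bar> \<le> C"
  proof (rule ideal_bound[where R="alg G0" and YG=YG and S="{x. \<bar>x\<bar> \<ge> \<delta>}"])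
    show "i \<in> ideal (alg G0) YG" using i unfolding Idl_def .
    show "\<exists>B. \<forall>x\<in>{x. \<bar>x\<bar> \<ge> \<delta>}. \<bar>r x\<bar> \<le> B" if "r \<in> alg G0" for r using alg_G0_bound[OF \<delta> that] .
    show "\<exists>C. \<forall>x\<in>{x. \<bar>x\<bar> \<ge> \<delta>}. \<bar>x ^ j * y x\<bar> \<le> C" if "y \<in> YG" for y j
      using YG_poly[OF that \<delta>, of j] by auto
  qed
  then show ?thesis by auto
qed

lemma tilde_Y:
  assumes Y: "Y \<in> Idl" and sm: "smooth_on (- {0}) Y"
  shows "Y \<in> tilde_schwartz"
  unfolding tilde_schwartz_def
proof (intro CollectI conjI ballI sm)
  fix \<phi> assume "\<phi> \<in> BC0_inf"
  then obtain a0 b0 where smp: "smooth_on UNIV \<phi>" and bd: "\<And>k. \<exists>C. \<forall>x. \<bar>(deriv ^^ k) \<phi> x\<bar> \<le> C"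
    and ab: "a0 < 0" "0 < b0" and van: "\<forall>x\<in>{a0<..<b0}. \<phi> x = 0"
    unfolding BC0_inf_def by blast
  have dT: "dclosed UNIV (tt \<phi> Idl)" by (rule tt_dclosed[OF smp ab van dclosed_Id])
  have mem: "(\<lambda>x. \<phi> x * Y x) \<in> tt \<phi> Idl" using tt.tb[OF Y, where n=0 and \<phi>=\<phi>] by simp
  have Ib: "\<exists>C. \<forall>x. \<bar>x\<bar> \<ge> min (-a0) b0 \<longrightarrow> \<bar>x ^ j * i x\<bar> \<le> C" if "i \<in> Idl" for i j
    by (rule Idl_bound[OF _ that]) (use ab in simp)
  show "(\<lambda>x. \<phi> x * Y x) \<in> schwartz"
    unfolding schwartz_def
  proof (intro CollectI conjI allI)
    show "smooth_on UNIV (\<lambda>x. \<phi> x * Y x)" by (rule dclosed_smooth[OF open_UNIV dT mem])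
    fix j k
    obtain t where t: "t \<in> tt \<phi> Idl" "\<And>x. (deriv ^^ k) (\<lambda>x. \<phi> x * Y x) x = t x"
      using dclosed_deriv_iter[OF open_UNIV dT mem, of k] by blast
    obtain C where "\<forall>x. \<bar>x ^ j * t x\<bar> \<le> C" using tt_bound[OF bd ab van Ib t(1)] by blast
    then show "\<exists>C. \<forall>x. \<bar>x ^ j * (deriv ^^ k) (\<lambda>x. \<phi> x * Y x) x\<bar> \<le> C" using t(2) by auto
  qed
qed

lemma main: "Y1 \<in> tilde_schwartz \<and> Y2 \<in> tilde_schwartz"
  using tilde_Y[OF YG_mem(1) smooth_Y1] tilde_Y[OF YG_mem(2) smooth_Y2] by simp

end

theorem lemma2p18:
  fixes p \<omega> \<gamma> e :: real and Y1 Y2 :: "real \<Rightarrow> real"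
  assumes "\<gamma> < 0" and "p > 5" and "\<omega> > \<gamma>\<^sup>2 / 4"
    and "e > 0"
    and "D_even \<gamma> Y1" and "D_even \<gamma> Y2"
    and "\<exists>x. Y1 x \<noteq> 0 \<or> Y2 x \<noteq> 0"
    and "Lplus_eq p \<omega> \<gamma> Y1 (\<lambda>x. e * Y2 x)"
    and "Lminus_eq p \<omega> \<gamma> Y2 (\<lambda>x. - e * Y1 x)"
  shows "Y1 \<in> tilde_schwartz \<and> Y2 \<in> tilde_schwartz"
proof -
  interpret setting p \<omega> \<gamma> e Y1 Y2
    by unfold_locales (use assms in auto)
  show ?thesis by (rule main)
qed

end
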